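(* Fix a task $(\mathcal{S},\mathcal{A},\_,d_0,\mathcal{R},\gamma)$. Let $\Pi$ be one of: (i) the set of all stationary policies; (ii) for some $\varepsilon>0$ and some transition model $\mathcal{T}_0$, the set of $\varepsilon$-suboptimal stationary policies $\{\pi: J_{\mathcal{T}_0}(\pi)\ge\sup_{\pi'}J_{\mathcal{T}_0}(\pi')-\varepsilon\}$; (iii) for some $\delta<1$, the set of $\delta$-deterministic stationary policies $\{\pi:\max_a\pi(a\mid s)\ge\delta\ \text{for every } s\in\mathcal{S}\}$. Then every pair of transition models $(\mathcal{T},\mathcal{T}')$ with $J_{\mathcal{T}},J_{\mathcal{T}'}$ both non-trivial on $\Pi$ and not equivalent on $\Pi$ is exploitable relative to $\Pi$ and this task.
   Context: Setting: finite $\mathcal{S}$, finite $\mathcal{A}$ with $|\mathcal{A}|>1$, $d_0\in\Delta(\mathcal{S})$, $\mathcal{R}:\mathcal{S}\times\mathcal{A}\to\mathbb{R}$, $\gamma\in[0,1)$; transition models $\mathcal{T}:\mathcal{S}\times\mathcal{A}\to\Delta(\mathcal{S})$; all states reachable. A task is an MDP without its transition model. Stationary policies $\pi:\mathcal{S}\to\Delta(\mathcal{A})$. $J_{\mathcal{T}}(\pi)=\mathbb{E}\big[\sum_{t\ge0}\gamma^t\mathcal{R}(s_t,a_t)\big]$ with $s_0\sim d_0$, $a_t\sim\pi(\cdot\mid s_t)$, $s_{t+1}\sim\mathcal{T}(\cdot\mid s_t,a_t)$; the supremum is over stationary policies. $J$ is trivial on $\Pi$ if constant on $\Pi$; $J_1,J_2$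 equivalent on $\Pi$ if for all $\pi,\pi'\in\Pi$, $J_1(\pi)\ge J_1(\pi')\iff J_2(\pi)\ge J_2(\pi')$. $(\mathcal{T},\mathcal{T}')$ is exploitable relative to $\Pi$ if there are $\pi,\pi'\in\Pi$ with $J_{\mathcal{T}}(\pi)>J_{\mathcal{T}}(\pi')$ and $J_{\mathcal{T}'}(\pi')>J_{\mathcal{T}'}(\pi)$. *)

theory Defs
  imports "HOL-Analysis.Analysis"
begin

definition is_dist :: "('x::finite \<Rightarrow> real) \<Rightarrow> bool" where
  "is_dist p \<longleftrightarrow> (\<forall>x. 0 \<le> p x) \<and> (\<Sum>x\<in>UNIV. p x) = 1"

definition is_policy :: "('s::finite \<Rightarrow> 'a::finite \<Rightarrow> real) \<Rightarrow> bool" where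
  "is_policy p \<longleftrightarrow> (\<forall>s. is_dist (p s))"

definition policies :: "('s::finite \<Rightarrow> 'a::finite \<Rightarrow> real) set" where
  "policies = {p. is_policy p}"

definition is_transition :: "('s::finite \<Rightarrow> 'a::finite \<Rightarrow> 's \<Rightarrow> real) \<Rightarrow> bool" where
  "is_transition T \<longleftrightarrow> (\<forall>s a. is_dist (T s a))"

fun state_dist :: "('s::finite \<Rightarrow> real) \<Rightarrow> ('s \<Rightarrow> 'a::finite \<Rightarrow> 's \<Rightarrow> real)
     \<Rightarrow> ('s \<Rightarrow> 'a \<Rightarrow> real) \<Rightarrow> nat \<Rightarrow> 's \<Rightarrow> real" where
  "state_dist d0 T p 0 = d0"
| "state_dist d0 T p (Suc t) =
     (\<lambda>s'. \<Sum>s\<in>UNIV. \<Sum>a\<in>UNIV. state_dist d0 T p t s * p s a * T s a s')"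

definition J :: "('s::finite \<Rightarrow> real) \<Rightarrow> ('s \<Rightarrow> 'a::finite \<Rightarrow> real) \<Rightarrow> real
     \<Rightarrow> ('s \<Rightarrow> 'a \<Rightarrow> 's \<Rightarrow> real) \<Rightarrow> ('s \<Rightarrow> 'a \<Rightarrow> real) \<Rightarrow> real" where
  "J d0 R \<gamma> T p = (\<Sum>t. \<gamma> ^ t * (\<Sum>s\<in>UNIV. \<Sum>a\<in>UNIV. state_dist d0 T p t s * p s a * R s a))"

definition all_reachable :: "('s::finite \<Rightarrow> real) \<Rightarrow> ('s \<Rightarrow> 'a::finite \<Rightarrow> 's \<Rightarrow> real) \<Rightarrow> bool" where
  "all_reachable d0 T \<longleftrightarrow>
     (\<forall>s. \<exists>p t. is_policy p \<and> state_dist d0 T p t s > 0)"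

definition trivial_on :: "('p \<Rightarrow> real) \<Rightarrow> 'p set \<Rightarrow> bool" where
  "trivial_on f P \<longleftrightarrow> (\<forall>x\<in>P. \<forall>y\<in>P. f x = f y)"

definition equivalent_on :: "('p \<Rightarrow> real) \<Rightarrow> ('p \<Rightarrow> real) \<Rightarrow> 'p set \<Rightarrow> bool" where
  "equivalent_on f g P \<longleftrightarrow> (\<forall>x\<in>P. \<forall>y\<in>P. f x \<ge> f y \<longleftrightarrow> g x \<ge> g y)"

definition exploitable :: "('s::finite \<Rightarrow> real) \<Rightarrow> ('s \<Rightarrow> 'a::finite \<Rightarrow> real) \<Rightarrow> real
     \<Rightarrow> ('s \<Rightarrow> 'a \<Rightarrow> 's \<Rightarrow> real) \<Rightarrow> ('s \<Rightarrow> 'a \<Rightarrow> 's \<Rightarrow> real)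
     \<Rightarrow> ('s \<Rightarrow> 'a \<Rightarrow> real) set \<Rightarrow> bool" where
  "exploitable d0 R \<gamma> T T' P \<longleftrightarrow>
     (\<exists>p\<in>P. \<exists>q\<in>P. J d0 R \<gamma> T p > J d0 R \<gamma> T q \<and> J d0 R \<gamma> T' q > J d0 R \<gamma> T' p)"

definition eps_suboptimal :: "('s::finite \<Rightarrow> real) \<Rightarrow> ('s \<Rightarrow> 'a::finite \<Rightarrow> real) \<Rightarrow> real
     \<Rightarrow> ('s \<Rightarrow> 'a \<Rightarrow> 's \<Rightarrow> real) \<Rightarrow> real \<Rightarrow> ('s \<Rightarrow> 'a \<Rightarrow> real) set" where
  "eps_suboptimal d0 R \<gamma> T0 \<epsilon> =
     {p \<in> policies. J d0 R \<gamma> T0 p \<ge> (SUP q\<in>policies. J d0 R \<gamma> T0 q) - \<epsilon>}"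

definition delta_deterministic :: "real \<Rightarrow> ('s::finite \<Rightarrow> 'a::finite \<Rightarrow> real) set" where
  "delta_deterministic \<delta> = {p \<in> policies. \<forall>s. (MAX a. p s a) \<ge> \<delta>}"

end

theory Submission
  imports Defs
begin

lemma dist_nonneg: "is_dist p \<Longrightarrow> 0 \<le> p x" unfolding is_dist_def by auto
lemma dist_sum: "is_dist p \<Longrightarrow> (\<Sum>x\<in>UNIV. p x) = 1" unfolding is_dist_def by auto

lemma sd_abs:
  assumes T: "is_transition T" and p: "is_policy p"
  shows "(\<Sum>s\<in>UNIV. \<bar>state_dist \<mu> T p t s\<bar>) \<le> (\<Sum>s\<in>UNIV. \<bar>\<mu> s\<bar>)"
proof (induction t)
  case 0
  then show ?case by simp
next
  case (Suc t)
  let ?d = "state_dist \<mu> T p t"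
  have Tn: "\<And>s a s'. 0 \<le> T s a s'" using T unfolding is_transition_def is_dist_def by auto
  have Ts: "\<And>s a. (\<Sum>s'\<in>UNIV. T s a s') = 1" using T unfolding is_transition_def is_dist_def by auto
  have pn: "\<And>s a. 0 \<le> p s a" using p unfolding is_policy_def is_dist_def by auto
  have ps: "\<And>s. (\<Sum>a\<in>UNIV. p s a) = 1" using p unfolding is_policy_def is_dist_def by auto
  have "(\<Sum>s'\<in>UNIV. \<bar>state_dist \<mu> T p (Suc t) s'\<bar>)
      = (\<Sum>s'\<in>UNIV. \<bar>\<Sum>s\<in>UNIV. \<Sum>a\<in>UNIV. ?d s * p s a * T s a s'\<bar>)" by simp
  also have "\<dots> \<le> (\<Sum>s'\<in>UNIV. \<Sum>s\<in>UNIV. \<Sum>a\<in>UNIV. \<bar>?d s\<bar> * p s a * T s a s')"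
  proof (rule sum_mono)
    fix s'
    have "\<bar>\<Sum>s\<in>UNIV. \<Sum>a\<in>UNIV. ?d s * p s a * T s a s'\<bar> \<le> (\<Sum>s\<in>UNIV. \<bar>\<Sum>a\<in>UNIV. ?d s * p s a * T s a s'\<bar>)"
      by (rule sum_abs)
    also have "\<dots> \<le> (\<Sum>s\<in>UNIV. \<Sum>a\<in>UNIV. \<bar>?d s * p s a * T s a s'\<bar>)"
      by (intro sum_mono sum_abs)
    also have "\<dots> = (\<Sum>s\<in>UNIV. \<Sum>a\<in>UNIV. \<bar>?d s\<bar> * p s a * T s a s')"
      using pn Tn by (simp add: abs_mult)
    finally show "\<bar>\<Sum>s\<in>UNIV. \<Sum>a\<in>UNIV. ?d s * p s a * T s a s'\<bar> \<le> (\<Sum>s\<in>UNIV. \<Sum>a\<in>UNIV. \<bar>?d s\<bar> * p s a * T s a s')" .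
  qed
  also have "\<dots> = (\<Sum>s\<in>UNIV. \<Sum>a\<in>UNIV. \<bar>?d s\<bar> * p s a * (\<Sum>s'\<in>UNIV. T s a s'))"
  proof -
    have "(\<Sum>s'\<in>UNIV. \<Sum>s\<in>UNIV. \<Sum>a\<in>UNIV. \<bar>?d s\<bar> * p s a * T s a s')
        = (\<Sum>s\<in>UNIV. \<Sum>a\<in>UNIV. \<Sum>s'\<in>UNIV. \<bar>?d s\<bar> * p s a * T s a s')"
      by (subst sum.swap) (rule sum.cong[OF refl], rule sum.swap)
    then show ?thesis by (simp add: sum_distrib_left)
  qed
  also have "\<dots> = (\<Sum>s\<in>UNIV. \<bar>?d s\<bar> * (\<Sum>a\<in>UNIV. p s a))"
    by (simp add: Ts sum_distrib_left)
  also have "\<dots> = (\<Sum>s\<in>UNIV. \<bar>?d s\<bar>)" by (simp add: ps)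
  also have "\<dots> \<le> (\<Sum>s\<in>UNIV. \<bar>\<mu> s\<bar>)" by (rule Suc)
  finally show ?case .
qed

definition occ :: "('s::finite \<Rightarrow> real) \<Rightarrow> ('s \<Rightarrow> 'a::finite \<Rightarrow> 's \<Rightarrow> real)
     \<Rightarrow> ('s \<Rightarrow> 'a \<Rightarrow> real) \<Rightarrow> real \<Rightarrow> 's \<Rightarrow> real" where
  "occ \<mu> T p \<gamma> s = (\<Sum>t. \<gamma> ^ t * state_dist \<mu> T p t s)"

lemma push_abs:
  assumes T: "is_transition T" and p: "is_policy p"
  shows "(\<Sum>s'\<in>UNIV. \<bar>\<Sum>s\<in>UNIV. \<Sum>a\<in>UNIV. x s * p s a * T s a s'\<bar>) \<le> (\<Sum>s\<in>UNIV. \<bar>x s\<bar>)"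
proof -
  have Tn: "\<And>s a s'. 0 \<le> T s a s'" using T unfolding is_transition_def is_dist_def by auto
  have Ts: "\<And>s a. (\<Sum>s'\<in>UNIV. T s a s') = 1" using T unfolding is_transition_def is_dist_def by auto
  have pn: "\<And>s a. 0 \<le> p s a" using p unfolding is_policy_def is_dist_def by auto
  have ps: "\<And>s. (\<Sum>a\<in>UNIV. p s a) = 1" using p unfolding is_policy_def is_dist_def by auto
  have "(\<Sum>s'\<in>UNIV. \<bar>\<Sum>s\<in>UNIV. \<Sum>a\<in>UNIV. x s * p s a * T s a s'\<bar>)
     \<le> (\<Sum>s'\<in>UNIV. \<Sum>s\<in>UNIV. \<Sum>a\<in>UNIV. \<bar>x s\<bar> * p s a * T s a s')"
  proof (rule sum_mono)
    fix s'
    have "\<bar>\<Sum>s\<in>UNIV. \<Sum>a\<in>UNIV. x s * p s a * T s a s'\<bar> \<le> (\<Sum>s\<in>UNIV. \<bar>\<Sum>a\<in>UNIV. x s * p s a * T s a s'\<bar>)"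
      by (rule sum_abs)
    also have "\<dots> \<le> (\<Sum>s\<in>UNIV. \<Sum>a\<in>UNIV. \<bar>x s * p s a * T s a s'\<bar>)"
      by (intro sum_mono sum_abs)
    also have "\<dots> = (\<Sum>s\<in>UNIV. \<Sum>a\<in>UNIV. \<bar>x s\<bar> * p s a * T s a s')"
      using pn Tn by (simp add: abs_mult)
    finally show "\<bar>\<Sum>s\<in>UNIV. \<Sum>a\<in>UNIV. x s * p s a * T s a s'\<bar> \<le> (\<Sum>s\<in>UNIV. \<Sum>a\<in>UNIV. \<bar>x s\<bar> * p s a * T s a s')" .
  qed
  also have "\<dots> = (\<Sum>s\<in>UNIV. \<Sum>a\<in>UNIV. \<bar>x s\<bar> * p s a * (\<Sum>s'\<in>UNIV. T s a s'))"
  proof -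
    have "(\<Sum>s'\<in>UNIV. \<Sum>s\<in>UNIV. \<Sum>a\<in>UNIV. \<bar>x s\<bar> * p s a * T s a s')
        = (\<Sum>s\<in>UNIV. \<Sum>a\<in>UNIV. \<Sum>s'\<in>UNIV. \<bar>x s\<bar> * p s a * T s a s')"
      by (subst sum.swap) (rule sum.cong[OF refl], rule sum.swap)
    then show ?thesis by (simp add: sum_distrib_left)
  qed
  also have "\<dots> = (\<Sum>s\<in>UNIV. \<bar>x s\<bar> * (\<Sum>a\<in>UNIV. p s a))"
    by (simp add: Ts sum_distrib_left)
  also have "\<dots> = (\<Sum>s\<in>UNIV. \<bar>x s\<bar>)" by (simp add: ps)
  finally show ?thesis .
qed

context
  fixes T :: "'s::finite \<Rightarrow> 'a::finite \<Rightarrow> 's \<Rightarrow> real" and p :: "'s \<Rightarrow> 'a \<Rightarrow> real" and \<gamma> :: real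
  assumes T: "is_transition T" and p: "is_policy p" and g0: "0 \<le> \<gamma>" and g1: "\<gamma> < 1"
begin

lemma sd_bound: "\<bar>state_dist \<mu> T p t s\<bar> \<le> (\<Sum>s\<in>UNIV. \<bar>\<mu> s\<bar>)"
proof -
  have "\<bar>state_dist \<mu> T p t s\<bar> \<le> (\<Sum>s\<in>UNIV. \<bar>state_dist \<mu> T p t s\<bar>)"
    by (rule member_le_sum) auto
  also have "\<dots> \<le> (\<Sum>s\<in>UNIV. \<bar>\<mu> s\<bar>)" by (rule sd_abs[OF T p])
  finally show ?thesis .
qed

lemma occ_summable: "summable (\<lambda>t. \<gamma> ^ t * state_dist \<mu> T p t s)"
proof (rule summable_comparison_test')
  show "summable (\<lambda>t. \<gamma> ^ t * (\<Sum>s\<in>UNIV. \<bar>\<mu> s\<bar>))"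
    using g0 g1 by (intro summable_mult2 summable_geometric) auto
  fix n :: nat
  show "norm (\<gamma> ^ n * state_dist \<mu> T p n s) \<le> \<gamma> ^ n * (\<Sum>s\<in>UNIV. \<bar>\<mu> s\<bar>)"
    using sd_bound[of \<mu> n s] g0 by (simp add: abs_mult mult_left_mono)
qed

lemma occ_eq: "occ \<mu> T p \<gamma> s' = \<mu> s' + \<gamma> * (\<Sum>s\<in>UNIV. \<Sum>a\<in>UNIV. occ \<mu> T p \<gamma> s * p s a * T s a s')"
proof -
  let ?f = "\<lambda>t. \<gamma> ^ t * state_dist \<mu> T p t s'"
  have sm: "summable ?f" by (rule occ_summable)
  have "(\<Sum>t. ?f (Suc t)) = (\<Sum>t. \<gamma> * (\<Sum>s\<in>UNIV. \<Sum>a\<in>UNIV. (\<gamma> ^ t * state_dist \<mu> T p t s) * (p s a * T s a s')))"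
    by (simp add: sum_distrib_left mult_ac)
  also have "\<dots> = \<gamma> * (\<Sum>t. (\<Sum>s\<in>UNIV. \<Sum>a\<in>UNIV. (\<gamma> ^ t * state_dist \<mu> T p t s) * (p s a * T s a s')))"
    by (rule suminf_mult) (intro summable_sum summable_mult2 occ_summable)
  also have "(\<Sum>t. (\<Sum>s\<in>UNIV. \<Sum>a\<in>UNIV. (\<gamma> ^ t * state_dist \<mu> T p t s) * (p s a * T s a s')))
      = (\<Sum>s\<in>UNIV. \<Sum>t. \<Sum>a\<in>UNIV. (\<gamma> ^ t * state_dist \<mu> T p t s) * (p s a * T s a s'))"
    by (rule suminf_sum) (intro summable_sum summable_mult2 occ_summable)
  also have "\<dots> = (\<Sum>s\<in>UNIV. \<Sum>a\<in>UNIV. \<Sum>t. (\<gamma> ^ t * state_dist \<mu> T p t s) * (p s a * T s a s'))"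
    by (intro sum.cong refl suminf_sum summable_mult2 occ_summable)
  also have "\<dots> = (\<Sum>s\<in>UNIV. \<Sum>a\<in>UNIV. occ \<mu> T p \<gamma> s * (p s a * T s a s'))"
    unfolding occ_def by (intro sum.cong refl suminf_mult2[symmetric] occ_summable)
  finally have "(\<Sum>t. ?f (Suc t)) = \<gamma> * (\<Sum>s\<in>UNIV. \<Sum>a\<in>UNIV. occ \<mu> T p \<gamma> s * p s a * T s a s')"
    by (simp add: mult_ac)
  moreover have "(\<Sum>t. ?f (Suc t)) = occ \<mu> T p \<gamma> s' - \<mu> s'"
    unfolding occ_def using suminf_split_head[OF sm] by simp
  ultimately show ?thesis by linarith
qed

lemma J_occ: "J \<mu> R \<gamma> T p = (\<Sum>s\<in>UNIV. \<Sum>a\<in>UNIV. occ \<mu> T p \<gamma> s * p s a * R s a)"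
proof -
  have "J \<mu> R \<gamma> T p = (\<Sum>t. (\<Sum>s\<in>UNIV. \<Sum>a\<in>UNIV. (\<gamma> ^ t * state_dist \<mu> T p t s) * (p s a * R s a)))"
    unfolding J_def by (simp add: sum_distrib_left mult_ac)
  also have "\<dots> = (\<Sum>s\<in>UNIV. \<Sum>t. \<Sum>a\<in>UNIV. (\<gamma> ^ t * state_dist \<mu> T p t s) * (p s a * R s a))"
    by (rule suminf_sum) (intro summable_sum summable_mult2 occ_summable)
  also have "\<dots> = (\<Sum>s\<in>UNIV. \<Sum>a\<in>UNIV. \<Sum>t. (\<gamma> ^ t * state_dist \<mu> T p t s) * (p s a * R s a))"
    by (intro sum.cong refl suminf_sum summable_mult2 occ_summable)
  also have "\<dots> = (\<Sum>s\<in>UNIV. \<Sum>a\<in>UNIV. occ \<mu> T p \<gamma> s * (p s a * R s a))"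
    unfolding occ_def by (intro sum.cong refl suminf_mult2[symmetric] occ_summable)
  finally show ?thesis by (simp add: mult_ac)
qed

lemma homog_zero:
  assumes h: "\<And>s'. x s' = \<gamma> * (\<Sum>s\<in>UNIV. \<Sum>a\<in>UNIV. x s * p s a * T s a s')"
  shows "x s = 0"
proof -
  have "(\<Sum>s'\<in>UNIV. \<bar>x s'\<bar>) = (\<Sum>s'\<in>UNIV. \<gamma> * \<bar>\<Sum>s\<in>UNIV. \<Sum>a\<in>UNIV. x s * p s a * T s a s'\<bar>)"
    using g0 by (subst h) (simp add: abs_mult)
  also have "\<dots> = \<gamma> * (\<Sum>s'\<in>UNIV. \<bar>\<Sum>s\<in>UNIV. \<Sum>a\<in>UNIV. x s * p s a * T s a s'\<bar>)"
    by (simp add: sum_distrib_left)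
  also have "\<dots> \<le> \<gamma> * (\<Sum>s\<in>UNIV. \<bar>x s\<bar>)"
    using g0 by (intro mult_left_mono push_abs[OF T p]) auto
  finally have "(1 - \<gamma>) * (\<Sum>s\<in>UNIV. \<bar>x s\<bar>) \<le> 0" by (simp add: algebra_simps)
  then have "(\<Sum>s\<in>UNIV. \<bar>x s\<bar>) \<le> 0" using g1
    by (simp add: mult_le_0_iff)
  then have "(\<Sum>s\<in>UNIV. \<bar>x s\<bar>) = 0" by (meson antisym sum_nonneg abs_ge_zero)
  then show ?thesis by (simp add: sum_nonneg_eq_0_iff)
qed

lemma occ_unique:
  assumes h: "\<And>s'. x s' = \<mu> s' + \<gamma> * (\<Sum>s\<in>UNIV. \<Sum>a\<in>UNIV. x s * p s a * T s a s')"
  shows "x s = occ \<mu> T p \<gamma> s"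
proof -
  let ?y = "\<lambda>s. x s - occ \<mu> T p \<gamma> s"
  have "?y s = 0"
  proof (rule homog_zero)
    fix s'
    show "?y s' = \<gamma> * (\<Sum>s\<in>UNIV. \<Sum>a\<in>UNIV. ?y s * p s a * T s a s')"
      apply (subst h, subst occ_eq)
      by (simp add: algebra_simps sum_subtractf)
  qed
  then show ?thesis by simp
qed

end

lemma push2:
  assumes T: "is_transition T"
  shows "(\<Sum>s'\<in>UNIV. \<bar>\<Sum>s\<in>UNIV. \<Sum>a\<in>UNIV. y s a * T s a s'\<bar>) \<le> (\<Sum>s\<in>UNIV. \<Sum>a\<in>UNIV. \<bar>y s a\<bar>)"
proof -
  have Tn: "\<And>s a s'. 0 \<le> T s a s'" using T unfolding is_transition_def is_dist_def by auto
  have Ts: "\<And>s a. (\<Sum>s'\<in>UNIV. T s a s') = 1" using T unfolding is_transition_def is_dist_def by auto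
  have "(\<Sum>s'\<in>UNIV. \<bar>\<Sum>s\<in>UNIV. \<Sum>a\<in>UNIV. y s a * T s a s'\<bar>)
     \<le> (\<Sum>s'\<in>UNIV. \<Sum>s\<in>UNIV. \<Sum>a\<in>UNIV. \<bar>y s a\<bar> * T s a s')"
  proof (rule sum_mono)
    fix s'
    have "\<bar>\<Sum>s\<in>UNIV. \<Sum>a\<in>UNIV. y s a * T s a s'\<bar> \<le> (\<Sum>s\<in>UNIV. \<bar>\<Sum>a\<in>UNIV. y s a * T s a s'\<bar>)"
      by (rule sum_abs)
    also have "\<dots> \<le> (\<Sum>s\<in>UNIV. \<Sum>a\<in>UNIV. \<bar>y s a * T s a s'\<bar>)"
      by (intro sum_mono sum_abs)
    also have "\<dots> = (\<Sum>s\<in>UNIV. \<Sum>a\<in>UNIV. \<bar>y s a\<bar> * T s a s')"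
      using Tn by (simp add: abs_mult)
    finally show "\<bar>\<Sum>s\<in>UNIV. \<Sum>a\<in>UNIV. y s a * T s a s'\<bar> \<le> (\<Sum>s\<in>UNIV. \<Sum>a\<in>UNIV. \<bar>y s a\<bar> * T s a s')" .
  qed
  also have "\<dots> = (\<Sum>s\<in>UNIV. \<Sum>a\<in>UNIV. \<bar>y s a\<bar> * (\<Sum>s'\<in>UNIV. T s a s'))"
  proof -
    have "(\<Sum>s'\<in>UNIV. \<Sum>s\<in>UNIV. \<Sum>a\<in>UNIV. \<bar>y s a\<bar> * T s a s')
        = (\<Sum>s\<in>UNIV. \<Sum>a\<in>UNIV. \<Sum>s'\<in>UNIV. \<bar>y s a\<bar> * T s a s')"
      by (subst sum.swap) (rule sum.cong[OF refl], rule sum.swap)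
    then show ?thesis by (simp add: sum_distrib_left)
  qed
  also have "\<dots> = (\<Sum>s\<in>UNIV. \<Sum>a\<in>UNIV. \<bar>y s a\<bar>)" by (simp add: Ts)
  finally show ?thesis .
qed

lemma occ_abs_bound:
  assumes T: "is_transition T" and p: "is_policy p" and g0: "0 \<le> \<gamma>" and g1: "\<gamma> < 1"
  shows "(\<Sum>s\<in>UNIV. \<bar>occ \<mu> T p \<gamma> s\<bar>) \<le> (\<Sum>s\<in>UNIV. \<bar>\<mu> s\<bar>) / (1 - \<gamma>)"
proof -
  let ?o = "occ \<mu> T p \<gamma>"
  have "(\<Sum>s'\<in>UNIV. \<bar>?o s'\<bar>) = (\<Sum>s'\<in>UNIV. \<bar>\<mu> s' + \<gamma> * (\<Sum>s\<in>UNIV. \<Sum>a\<in>UNIV. ?o s * p s a * T s a s')\<bar>)"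
    by (subst occ_eq[OF T p g0 g1]) simp
  also have "\<dots> \<le> (\<Sum>s'\<in>UNIV. \<bar>\<mu> s'\<bar> + \<gamma> * \<bar>\<Sum>s\<in>UNIV. \<Sum>a\<in>UNIV. ?o s * p s a * T s a s'\<bar>)"
    using g0 by (intro sum_mono) (simp add: abs_mult abs_triangle_ineq[THEN order_trans])
  also have "\<dots> = (\<Sum>s'\<in>UNIV. \<bar>\<mu> s'\<bar>) + \<gamma> * (\<Sum>s'\<in>UNIV. \<bar>\<Sum>s\<in>UNIV. \<Sum>a\<in>UNIV. ?o s * p s a * T s a s'\<bar>)"
    by (simp add: sum.distrib sum_distrib_left)
  also have "\<dots> \<le> (\<Sum>s'\<in>UNIV. \<bar>\<mu> s'\<bar>) + \<gamma> * (\<Sum>s\<in>UNIV. \<bar>?o s\<bar>)"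
    using g0 push_abs[OF T p] by (intro add_left_mono mult_left_mono) auto
  finally have "(1 - \<gamma>) * (\<Sum>s\<in>UNIV. \<bar>?o s\<bar>) \<le> (\<Sum>s'\<in>UNIV. \<bar>\<mu> s'\<bar>)" by (simp add: algebra_simps)
  then show ?thesis using g1 by (simp add: field_simps)
qed

lemma J_lip:
  fixes \<mu> :: "'s::finite \<Rightarrow> real" and R :: "'s \<Rightarrow> 'a::finite \<Rightarrow> real"
    and T :: "'s \<Rightarrow> 'a \<Rightarrow> 's \<Rightarrow> real"
  assumes T: "is_transition T" and g0: "0 \<le> \<gamma>" and g1: "\<gamma> < 1"
  shows "\<exists>K\<ge>0. \<forall>p q h. is_policy p \<longrightarrow> is_policy q \<longrightarrow> (\<forall>s a. \<bar>p s a - q s a\<bar> \<le> h) \<longrightarrow>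
            \<bar>J \<mu> R \<gamma> T p - J \<mu> R \<gamma> T q\<bar> \<le> K * h"
proof -
  define M where "M = (\<Sum>s\<in>UNIV. \<bar>\<mu> s\<bar>) / (1 - \<gamma>)"
  define Rm where "Rm = (\<Sum>s\<in>UNIV. \<Sum>a\<in>UNIV. \<bar>R s a\<bar>)"
  define C where "C = real CARD('a)"
  have M0: "0 \<le> M" unfolding M_def using g1 by (intro divide_nonneg_pos sum_nonneg) auto
  have Rm0: "0 \<le> Rm" unfolding Rm_def by (intro sum_nonneg) auto
  have C0: "0 \<le> C" unfolding C_def by simp
  have Rle: "\<And>s a. \<bar>R s a\<bar> \<le> Rm"
  proof -
    fix s a
    have "\<bar>R s a\<bar> \<le> (\<Sum>a\<in>UNIV. \<bar>R s a\<bar>)" by (rule member_le_sum) auto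
    also have "\<dots> \<le> Rm" unfolding Rm_def by (rule member_le_sum[of s]) (auto intro: sum_nonneg)
    finally show "\<bar>R s a\<bar> \<le> Rm" .
  qed
  define K where "K = Rm * (C * M / (1 - \<gamma>) + C * M)"
  have K0: "0 \<le> K" unfolding K_def using Rm0 C0 M0 g1 by (intro mult_nonneg_nonneg add_nonneg_nonneg divide_nonneg_pos) auto
  show ?thesis
  proof (intro exI[of _ K] conjI K0 allI impI)
    fix p q :: "'s \<Rightarrow> 'a \<Rightarrow> real" and h :: real
    assume p: "is_policy p" and q: "is_policy q" and hq: "\<forall>s a. \<bar>p s a - q s a\<bar> \<le> h"
    have pn: "\<And>s a. 0 \<le> p s a" using p unfolding is_policy_def is_dist_def by auto
    have ps: "\<And>s. (\<Sum>a\<in>UNIV. p s a) = 1" using p unfolding is_policy_def is_dist_def by auto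
    let ?op = "occ \<mu> T p \<gamma>" and ?oq = "occ \<mu> T q \<gamma>"
    define D where "D = (\<lambda>s. ?op s - ?oq s)"
    have Mq: "(\<Sum>s\<in>UNIV. \<bar>?oq s\<bar>) \<le> M" unfolding M_def by (rule occ_abs_bound[OF T q g0 g1])
    have h0: "0 \<le> h" using hq by (meson abs_ge_zero order_trans)
    have Deq: "D s' = \<gamma> * (\<Sum>s\<in>UNIV. \<Sum>a\<in>UNIV. (D s * p s a + ?oq s * (p s a - q s a)) * T s a s')" for s'
      unfolding D_def
      apply (subst occ_eq[OF T p g0 g1], subst occ_eq[OF T q g0 g1])
      by (simp add: algebra_simps sum_subtractf sum.distrib)
    have inner: "(\<Sum>s\<in>UNIV. \<Sum>a\<in>UNIV. \<bar>D s * p s a + ?oq s * (p s a - q s a)\<bar>)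
        \<le> (\<Sum>s\<in>UNIV. \<bar>D s\<bar>) + C * h * (\<Sum>s\<in>UNIV. \<bar>?oq s\<bar>)"
    proof -
      have "(\<Sum>s\<in>UNIV. \<Sum>a\<in>UNIV. \<bar>D s * p s a + ?oq s * (p s a - q s a)\<bar>)
          \<le> (\<Sum>s\<in>UNIV. \<Sum>a\<in>UNIV. \<bar>D s\<bar> * p s a + \<bar>?oq s\<bar> * h)"
      proof (intro sum_mono)
        fix s a
        have "\<bar>?oq s * (p s a - q s a)\<bar> \<le> \<bar>?oq s\<bar> * h"
          using hq by (simp add: abs_mult mult_left_mono)
        then show "\<bar>D s * p s a + ?oq s * (p s a - q s a)\<bar> \<le> \<bar>D s\<bar> * p s a + \<bar>?oq s\<bar> * h"
        proof -
          have "\<bar>D s * p s a\<bar> = \<bar>D s\<bar> * p s a" using pn[of s a] by (simp add: abs_mult)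
          then show ?thesis using \<open>\<bar>?oq s * (p s a - q s a)\<bar> \<le> \<bar>?oq s\<bar> * h\<close>
              abs_triangle_ineq[of "D s * p s a" "?oq s * (p s a - q s a)"] by linarith
        qed
      qed
      also have "\<dots> = (\<Sum>s\<in>UNIV. \<bar>D s\<bar>) + C * h * (\<Sum>s\<in>UNIV. \<bar>?oq s\<bar>)"
      proof -
        have "(\<Sum>s\<in>UNIV. \<Sum>a\<in>UNIV. \<bar>D s\<bar> * p s a + \<bar>?oq s\<bar> * h)
            = (\<Sum>s\<in>UNIV. \<bar>D s\<bar> * (\<Sum>a\<in>UNIV. p s a) + C * h * \<bar>?oq s\<bar>)"
          by (intro sum.cong refl) (simp add: sum.distrib sum_distrib_left C_def)
        also have "\<dots> = (\<Sum>s\<in>UNIV. \<bar>D s\<bar>) + (\<Sum>s\<in>UNIV. C * h * \<bar>?oq s\<bar>)"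
          by (simp add: ps sum.distrib)
        also have "\<dots> = (\<Sum>s\<in>UNIV. \<bar>D s\<bar>) + C * h * (\<Sum>s\<in>UNIV. \<bar>?oq s\<bar>)"
          by (simp add: sum_distrib_left)
        finally show ?thesis .
      qed
      finally show ?thesis .
    qed
    have "(\<Sum>s'\<in>UNIV. \<bar>D s'\<bar>) = \<gamma> * (\<Sum>s'\<in>UNIV. \<bar>\<Sum>s\<in>UNIV. \<Sum>a\<in>UNIV. (D s * p s a + ?oq s * (p s a - q s a)) * T s a s'\<bar>)"
    proof -
      have "(\<Sum>s'\<in>UNIV. \<bar>D s'\<bar>) = (\<Sum>s'\<in>UNIV. \<gamma> * \<bar>\<Sum>s\<in>UNIV. \<Sum>a\<in>UNIV. (D s * p s a + ?oq s * (p s a - q s a)) * T s a s'\<bar>)"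
        using g0 by (intro sum.cong refl, subst Deq) (simp add: abs_mult)
      then show ?thesis by (simp add: sum_distrib_left)
    qed
    also have "\<dots> \<le> \<gamma> * ((\<Sum>s\<in>UNIV. \<bar>D s\<bar>) + C * h * (\<Sum>s\<in>UNIV. \<bar>?oq s\<bar>))"
      using g0 order_trans[OF push2[OF T, of "\<lambda>s a. D s * p s a + ?oq s * (p s a - q s a)"] inner]
      by (intro mult_left_mono) auto
    finally have "(1 - \<gamma>) * (\<Sum>s'\<in>UNIV. \<bar>D s'\<bar>) \<le> \<gamma> * (C * h * (\<Sum>s\<in>UNIV. \<bar>?oq s\<bar>))"
      by (simp add: algebra_simps)
    also have "\<dots> \<le> C * h * M"
    proof -
      have "C * h * (\<Sum>s\<in>UNIV. \<bar>?oq s\<bar>) \<le> C * h * M" using Mq C0 h0 by (intro mult_left_mono) auto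
      moreover have "0 \<le> C * h * (\<Sum>s\<in>UNIV. \<bar>?oq s\<bar>)" using C0 h0 by (intro mult_nonneg_nonneg sum_nonneg) auto
      ultimately show ?thesis using g0 g1 by (smt (verit) mult_left_le_one_le)
    qed
    finally have SD: "(\<Sum>s'\<in>UNIV. \<bar>D s'\<bar>) \<le> C * h * M / (1 - \<gamma>)" using g1 by (simp add: field_simps)
    have "J \<mu> R \<gamma> T p - J \<mu> R \<gamma> T q = (\<Sum>s\<in>UNIV. \<Sum>a\<in>UNIV. (D s * p s a + ?oq s * (p s a - q s a)) * R s a)"
      unfolding J_occ[OF T p g0 g1] J_occ[OF T q g0 g1] D_def
      by (simp add: algebra_simps sum_subtractf sum.distrib)
    also have "\<bar>\<dots>\<bar> \<le> (\<Sum>s\<in>UNIV. \<Sum>a\<in>UNIV. \<bar>D s * p s a + ?oq s * (p s a - q s a)\<bar> * Rm)"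
    proof -
      have "\<bar>\<Sum>s\<in>UNIV. \<Sum>a\<in>UNIV. (D s * p s a + ?oq s * (p s a - q s a)) * R s a\<bar>
          \<le> (\<Sum>s\<in>UNIV. \<Sum>a\<in>UNIV. \<bar>(D s * p s a + ?oq s * (p s a - q s a)) * R s a\<bar>)"
        by (rule order_trans[OF sum_abs], intro sum_mono sum_abs)
      also have "\<dots> \<le> (\<Sum>s\<in>UNIV. \<Sum>a\<in>UNIV. \<bar>D s * p s a + ?oq s * (p s a - q s a)\<bar> * Rm)"
        by (intro sum_mono) (simp add: abs_mult mult_left_mono Rle)
      finally show ?thesis .
    qed
    also have "\<dots> = Rm * (\<Sum>s\<in>UNIV. \<Sum>a\<in>UNIV. \<bar>D s * p s a + ?oq s * (p s a - q s a)\<bar>)"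
      by (simp add: sum_distrib_left sum_distrib_right mult_ac)
    also have "\<dots> \<le> Rm * ((\<Sum>s\<in>UNIV. \<bar>D s\<bar>) + C * h * (\<Sum>s\<in>UNIV. \<bar>?oq s\<bar>))"
      using inner Rm0 by (rule mult_left_mono)
    also have "\<dots> \<le> Rm * (C * h * M / (1 - \<gamma>) + C * h * M)"
      using SD Mq Rm0 C0 h0 by (intro mult_left_mono add_mono) (auto intro: mult_left_mono)
    also have "\<dots> = K * h" unfolding K_def by (simp add: algebra_simps)
    finally show "\<bar>J \<mu> R \<gamma> T p - J \<mu> R \<gamma> T q\<bar> \<le> K * h" .
  qed
qed

definition mixp :: "('s \<Rightarrow> 'a \<Rightarrow> real) \<Rightarrow> 's \<Rightarrow> ('a \<Rightarrow> real) \<Rightarrow> real \<Rightarrow> 's \<Rightarrow> 'a \<Rightarrow> real" where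
  "mixp p s0 e t = p(s0 := (\<lambda>a. (1 - t) * p s0 a + t * e a))"

lemma mixp_policy:
  assumes p: "is_policy p" and e: "is_dist e" and t: "0 \<le> t" "t \<le> 1"
  shows "is_policy (mixp p s0 e t)"
proof -
  have pd: "is_dist (p s0)" using p unfolding is_policy_def by auto
  have "is_dist (\<lambda>a. (1 - t) * p s0 a + t * e a)"
    using pd e t unfolding is_dist_def
    by (auto simp: sum.distrib sum_distrib_left[symmetric] intro!: add_nonneg_nonneg mult_nonneg_nonneg)
  then show ?thesis using p unfolding is_policy_def mixp_def by auto
qed

lemma mixp_0[simp]: "mixp p s0 e 0 = p" unfolding mixp_def by auto
lemma mixp_1[simp]: "mixp p s0 e 1 = p(s0 := e)" unfolding mixp_def by auto

lemma mixp_split: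
  fixes y :: "'s::finite \<Rightarrow> real" and W :: "'s \<Rightarrow> 'a::finite \<Rightarrow> real"
  shows "(\<Sum>s\<in>UNIV. \<Sum>a\<in>UNIV. y s * mixp p s0 e t s a * W s a)
     = (\<Sum>s\<in>UNIV. \<Sum>a\<in>UNIV. y s * p s a * W s a) + t * y s0 * (\<Sum>a\<in>UNIV. (e a - p s0 a) * W s0 a)"
proof -
  have "(\<Sum>s\<in>UNIV. \<Sum>a\<in>UNIV. y s * mixp p s0 e t s a * W s a)
      = (\<Sum>s\<in>UNIV. \<Sum>a\<in>UNIV. y s * p s a * W s a + (if s = s0 then t * y s0 * ((e a - p s0 a) * W s0 a) else 0))"
    by (intro sum.cong refl) (auto simp: mixp_def algebra_simps)
  also have "\<dots> = (\<Sum>s\<in>UNIV. \<Sum>a\<in>UNIV. y s * p s a * W s a) + (\<Sum>s\<in>UNIV. \<Sum>a\<in>UNIV. (if s = s0 then t * y s0 * ((e a - p s0 a) * W s0 a) else 0))"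
    by (simp add: sum.distrib)
  also have "(\<Sum>s\<in>UNIV. \<Sum>a\<in>UNIV. (if s = s0 then t * y s0 * ((e a - p s0 a) * W s0 a) else 0))
      = (\<Sum>s\<in>UNIV. if s = s0 then (\<Sum>a\<in>UNIV. t * y s0 * ((e a - p s0 a) * W s0 a)) else 0)"
    by (intro sum.cong refl) auto
  also have "\<dots> = t * y s0 * (\<Sum>a\<in>UNIV. (e a - p s0 a) * W s0 a)"
    by (simp add: sum_distrib_left)
  finally show ?thesis .
qed

lemma mobius:
  fixes \<mu> :: "'s::finite \<Rightarrow> real" and R :: "'s \<Rightarrow> 'a::finite \<Rightarrow> real"
    and T :: "'s \<Rightarrow> 'a \<Rightarrow> 's \<Rightarrow> real"
  assumes T: "is_transition T" and g0: "0 \<le> \<gamma>" and g1: "\<gamma> < 1"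
    and p: "is_policy p" and e: "is_dist e"
  shows "\<exists>\<alpha> \<beta> \<delta>. \<forall>t\<in>{0..1}. 0 < 1 + \<delta> * t \<and> J \<mu> R \<gamma> T (mixp p s0 e t) = (\<alpha> + \<beta> * t) / (1 + \<delta> * t)"
proof -
  define E where "E = (\<lambda>s'. \<Sum>a\<in>UNIV. (e a - p s0 a) * T s0 a s')"
  define g where "g = (\<lambda>s. \<gamma> * occ E T p \<gamma> s)"
  define occ0 where "occ0 = occ \<mu> T p \<gamma>"
  define \<eta> where "\<eta> = (\<Sum>a\<in>UNIV. (e a - p s0 a) * R s0 a)"
  define \<kappa> where "\<kappa> = (\<Sum>s\<in>UNIV. \<Sum>a\<in>UNIV. g s * p s a * R s a) + \<eta>"
  define J0 where "J0 = J \<mu> R \<gamma> T p"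
  have geq: "g s' = \<gamma> * E s' + \<gamma> * (\<Sum>s\<in>UNIV. \<Sum>a\<in>UNIV. g s * p s a * T s a s')" for s'
    unfolding g_def
    by (subst occ_eq[OF T p g0 g1]) (simp add: algebra_simps sum_distrib_left)
  have key: "0 < 1 - t * g s0 \<and> J \<mu> R \<gamma> T (mixp p s0 e t) = J0 + t * (occ0 s0 / (1 - t * g s0)) * \<kappa>"
    if t: "0 \<le> t" "t \<le> 1" for t
  proof -
    note pt = mixp_policy[OF p e t, of s0]
    define y where "y = occ \<mu> T (mixp p s0 e t) \<gamma>"
    define Y where "Y = y s0"
    have ysplit: "y s' = \<mu> s' + \<gamma> * t * Y * E s' + \<gamma> * (\<Sum>s\<in>UNIV. \<Sum>a\<in>UNIV. y s * p s a * T s a s')" for s'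
      unfolding y_def Y_def E_def
      apply (subst occ_eq[OF T pt g0 g1])
      apply (subst mixp_split)
      by (simp add: algebra_simps)
    have yz: "y s = occ0 s + t * Y * g s" for s
    proof -
      have "y s - (occ0 s + t * Y * g s) = 0"
      proof (rule homog_zero[OF T p g0 g1, where x = "\<lambda>s. y s - (occ0 s + t * Y * g s)"])
        fix s'
        show "y s' - (occ0 s' + t * Y * g s') =
          \<gamma> * (\<Sum>s\<in>UNIV. \<Sum>a\<in>UNIV. (y s - (occ0 s + t * Y * g s)) * p s a * T s a s')"
          apply (subst ysplit, subst geq)
          unfolding occ0_def
          apply (subst occ_eq[OF T p g0 g1])
          by (simp add: algebra_simps sum_subtractf sum.distrib sum_distrib_left)
      qed
      then show ?thesis by simp
    qed
    have nz: "1 - t' * g s0 \<noteq> 0" if t': "0 \<le> t'" "t' \<le> 1" for t'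
    proof
      assume h: "1 - t' * g s0 = 0"
      note pt' = mixp_policy[OF p e t', of s0]
      have "g s0 = 0"
      proof (rule homog_zero[OF T pt' g0 g1])
        fix s'
        show "g s' = \<gamma> * (\<Sum>s\<in>UNIV. \<Sum>a\<in>UNIV. g s * mixp p s0 e t' s a * T s a s')"
          apply (subst mixp_split)
          apply (subst geq)
          using h unfolding E_def by (simp add: algebra_simps)
      qed
      then show False using h by simp
    qed
    have pos: "0 < 1 - t * g s0"
    proof (cases "g s0 \<le> 0")
      case True
      then show ?thesis using t by (smt (verit) mult_nonneg_nonpos)
    next
      case False
      have "1 - g s0 \<noteq> 0" using nz[of 1] by simp
      moreover have "\<not> 1 - g s0 < 0"
      proof
        assume "1 - g s0 < 0"
        then have "0 \<le> 1 / g s0" "1 / g s0 \<le> 1" using False by auto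
        from nz[OF this] show False using False by simp
      qed
      ultimately have "0 < 1 - g s0" by simp
      moreover have "t * g s0 \<le> g s0" using t False by (simp add: mult_left_le_one_le)
      ultimately show ?thesis by simp
    qed
    have Yeq: "Y = occ0 s0 / (1 - t * g s0)"
      using yz[of s0] pos unfolding Y_def[symmetric] by (simp add: field_simps)
    have "J \<mu> R \<gamma> T (mixp p s0 e t) = (\<Sum>s\<in>UNIV. \<Sum>a\<in>UNIV. y s * mixp p s0 e t s a * R s a)"
      unfolding y_def by (rule J_occ[OF T pt g0 g1])
    also have "\<dots> = (\<Sum>s\<in>UNIV. \<Sum>a\<in>UNIV. y s * p s a * R s a) + t * Y * \<eta>"
      unfolding Y_def \<eta>_def by (rule mixp_split)
    also have "(\<Sum>s\<in>UNIV. \<Sum>a\<in>UNIV. y s * p s a * R s a)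
       = (\<Sum>s\<in>UNIV. \<Sum>a\<in>UNIV. occ0 s * p s a * R s a) + t * Y * (\<Sum>s\<in>UNIV. \<Sum>a\<in>UNIV. g s * p s a * R s a)"
      by (simp add: yz algebra_simps sum.distrib sum_distrib_left)
    also have "(\<Sum>s\<in>UNIV. \<Sum>a\<in>UNIV. occ0 s * p s a * R s a) = J0"
      unfolding J0_def occ0_def by (rule J_occ[OF T p g0 g1, symmetric])
    finally have "J \<mu> R \<gamma> T (mixp p s0 e t) = J0 + t * Y * \<kappa>" unfolding \<kappa>_def by (simp add: algebra_simps)
    then show ?thesis using pos Yeq by simp
  qed
  show ?thesis
  proof (intro exI ballI)
    fix t :: real assume "t \<in> {0..1}"
    then have t: "0 \<le> t" "t \<le> 1" by auto
    from key[OF t] show "0 < 1 + (- g s0) * t \<and> J \<mu> R \<gamma> T (mixp p s0 e t) = (J0 + (occ0 s0 * \<kappa> - J0 * g s0) * t) / (1 + (- g s0) * t)"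
      by (simp add: field_simps)
  qed
qed

definition mob :: "(('s::finite \<Rightarrow> 'a::finite \<Rightarrow> real) \<Rightarrow> real) \<Rightarrow> bool" where
  "mob F \<longleftrightarrow> (\<forall>q s e. is_policy q \<longrightarrow> is_dist e \<longrightarrow>
      (\<exists>\<alpha> \<beta> \<delta>. \<forall>t\<in>{0..1}. 0 < 1 + \<delta> * t \<and> F (mixp q s e t) = (\<alpha> + \<beta> * t) / (1 + \<delta> * t)))"

definition lip :: "(('s::finite \<Rightarrow> 'a::finite \<Rightarrow> real) \<Rightarrow> real) \<Rightarrow> bool" where
  "lip F \<longleftrightarrow> (\<exists>K\<ge>0. \<forall>p q h. is_policy p \<longrightarrow> is_policy q \<longrightarrow> (\<forall>s a. \<bar>p s a - q s a\<bar> \<le> h) \<longrightarrow>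
            \<bar>F p - F q\<bar> \<le> K * h)"

definition near :: "('s \<Rightarrow> 'a \<Rightarrow> real) \<Rightarrow> real \<Rightarrow> ('s \<Rightarrow> 'a \<Rightarrow> real) \<Rightarrow> bool" where
  "near m r q \<longleftrightarrow> (\<forall>s a. \<bar>q s a - m s a\<bar> < r)"

lemma J_mob:
  fixes \<mu> :: "'s::finite \<Rightarrow> real" and R :: "'s \<Rightarrow> 'a::finite \<Rightarrow> real"
    and T :: "'s \<Rightarrow> 'a \<Rightarrow> 's \<Rightarrow> real"
  assumes T: "is_transition T" and g0: "0 \<le> \<gamma>" and g1: "\<gamma> < 1"
  shows "mob (J \<mu> R \<gamma> T)"
  unfolding mob_def using mobius[OF T g0 g1] by blast

lemma J_lip':
  fixes \<mu> :: "'s::finite \<Rightarrow> real" and R :: "'s \<Rightarrow> 'a::finite \<Rightarrow> real"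
    and T :: "'s \<Rightarrow> 'a \<Rightarrow> 's \<Rightarrow> real"
  assumes T: "is_transition T" and g0: "0 \<le> \<gamma>" and g1: "\<gamma> < 1"
  shows "lip (J \<mu> R \<gamma> T)"
  unfolding lip_def using J_lip[OF T g0 g1] by blast

lemma pol_le1: "is_policy p \<Longrightarrow> p s a \<le> 1"
proof -
  assume p: "is_policy p"
  then have d: "is_dist (p s)" unfolding is_policy_def by auto
  have "p s a \<le> (\<Sum>a\<in>UNIV. p s a)" using d unfolding is_dist_def by (intro member_le_sum) auto
  then show ?thesis using d unfolding is_dist_def by auto
qed

lemma pol_ge0: "is_policy p \<Longrightarrow> 0 \<le> p s a"
  unfolding is_policy_def is_dist_def by auto

lemma pol_upd: "is_policy p \<Longrightarrow> is_dist e \<Longrightarrow> is_policy (p(s := e))"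
  unfolding is_policy_def by auto

lemma pol_row: "is_policy p \<Longrightarrow> is_dist (p s)"
  unfolding is_policy_def by auto

lemma rat2_zero:
  fixes f :: "real \<Rightarrow> real"
  assumes den: "\<And>t. t \<in> {0..1} \<Longrightarrow> den t \<noteq> 0 \<and> f t * den t = c0 + c1 * t + c2 * t^2"
    and t0: "0 < t0" "t0 \<le> 1" and z: "\<forall>t\<in>{0..t0}. f t = 0"
  shows "f 1 = 0"
proof -
  have "c0 + c1 * 0 + c2 * 0^2 = 0" using den[of 0] z t0 by auto
  then have c0: "c0 = 0" by simp
  have "c0 + c1 * (t0/2) + c2 * (t0/2)^2 = 0" using den[of "t0/2"] z[rule_format, of "t0/2"] t0 by auto
  then have "(t0/2) * (c1 + c2 * (t0/2)) = 0" using c0 by (simp add: power2_eq_square algebra_simps)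
  then have e1: "c1 + c2 * (t0/2) = 0" using t0 by simp
  have "c0 + c1 * t0 + c2 * t0^2 = 0" using den[of t0] z[rule_format, of t0] t0 by auto
  then have "t0 * (c1 + c2 * t0) = 0" using c0 by (simp add: power2_eq_square algebra_simps)
  then have e2: "c1 + c2 * t0 = 0" using t0 by simp
  have "c2 * (t0/2) = (c1 + c2 * t0) - (c1 + c2 * (t0/2))" by (simp add: algebra_simps)
  then have "c2 * (t0/2) = 0" by (simp only: e1 e2 diff_zero)
  then have c2: "c2 = 0" using t0 by simp
  then have c1: "c1 = 0" using e2 by simp
  have d1a: "den 1 \<noteq> 0" and d1b: "f 1 * den 1 = c0 + c1 * 1 + c2 * 1^2" using den[of 1] by auto
  have "f 1 * den 1 = 0" unfolding d1b c0 c1 c2 by simp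
  then show ?thesis using d1a by simp
qed

lemma propagate:
  fixes \<Phi> :: "('s::finite \<Rightarrow> 'a::finite \<Rightarrow> real) \<Rightarrow> real"
  assumes H: "\<And>q s e t0. is_policy q \<Longrightarrow> is_dist e \<Longrightarrow> 0 < t0 \<Longrightarrow> t0 \<le> 1 \<Longrightarrow>
        (\<forall>t\<in>{0..t0}. \<Phi> (mixp q s e t) = 0) \<Longrightarrow> \<Phi> (q(s := e)) = 0"
    and m: "is_policy m" and r: "0 < r"
    and Z: "\<And>q. is_policy q \<Longrightarrow> near m r q \<Longrightarrow> \<Phi> q = 0"
    and q: "is_policy q"
  shows "\<Phi> q = 0"
proof -
  have "\<forall>q. is_policy q \<longrightarrow> (\<forall>s. s \<notin> F \<longrightarrow> (\<forall>a. \<bar>q s a - m s a\<bar> < r)) \<longrightarrow> \<Phi> q = 0"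
    if "finite F" for F :: "'s set"
    using that
  proof (induction F rule: finite_induct)
    case empty
    then show ?case using Z unfolding near_def by auto
  next
    case (insert s F)
    show ?case
    proof (intro allI impI)
      fix q :: "'s \<Rightarrow> 'a \<Rightarrow> real"
      assume q: "is_policy q" and nq: "\<forall>s'. s' \<notin> insert s F \<longrightarrow> (\<forall>a. \<bar>q s' a - m s' a\<bar> < r)"
      define q' where "q' = q(s := m s)"
      have q': "is_policy q'" unfolding q'_def using q m by (intro pol_upd pol_row)
      define t0 where "t0 = min 1 (r / 2)"
      have t0: "0 < t0" "t0 \<le> 1" unfolding t0_def using r by auto
      have "\<Phi> (q'(s := q s)) = 0"
      proof (rule H[OF q' pol_row[OF q] t0])
        show "\<forall>t\<in>{0..t0}. \<Phi> (mixp q' s (q s) t) = 0"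
        proof
          fix t assume t: "t \<in> {0..t0}"
          have pt: "is_policy (mixp q' s (q s) t)" using t t0 by (intro mixp_policy q' pol_row q) auto
          have nb: "\<forall>s'. s' \<notin> F \<longrightarrow> (\<forall>a. \<bar>mixp q' s (q s) t s' a - m s' a\<bar> < r)"
          proof (intro allI impI)
            fix s' a assume s': "s' \<notin> F"
            show "\<bar>mixp q' s (q s) t s' a - m s' a\<bar> < r"
            proof (cases "s' = s")
              case True
              have "mixp q' s (q s) t s' a - m s' a = t * (q s a - m s a)"
                using True unfolding mixp_def q'_def by (simp add: algebra_simps)
              then have "\<bar>mixp q' s (q s) t s' a - m s' a\<bar> = t * \<bar>q s a - m s a\<bar>"
                using t by (simp add: abs_mult)
              also have "\<dots> \<le> t * 1"
                using t t0 pol_le1[OF q, of s a] pol_ge0[OF q, of s a] pol_le1[OF m, of s a] pol_ge0[OF m, of s a]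
                by (intro mult_left_mono) auto
              also have "\<dots> < r" using t unfolding t0_def using r by auto
              finally show ?thesis .
            next
              case False
              then show ?thesis using nq s' unfolding mixp_def q'_def by auto
            qed
          qed
          show "\<Phi> (mixp q' s (q s) t) = 0" using insert.IH pt nb by blast
        qed
      qed
      moreover have "q'(s := q s) = q" unfolding q'_def by auto
      ultimately show "\<Phi> q = 0" by simp
    qed
  qed
  from this[of UNIV] q show ?thesis by auto
qed

lemma const_propagate:
  fixes F :: "('s::finite \<Rightarrow> 'a::finite \<Rightarrow> real) \<Rightarrow> real"
  assumes F: "mob F" and m: "is_policy m" and r: "0 < r"
    and Z: "\<And>q. is_policy q \<Longrightarrow> near m r q \<Longrightarrow> F q = c"
    and q: "is_policy q"
  shows "F q = c"
proof -
  have "(\<lambda>q. F q - c) q = 0"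
  proof (rule propagate[OF _ m r _ q])
    fix q :: "'s \<Rightarrow> 'a \<Rightarrow> real" and s e t0
    assume q: "is_policy q" and e: "is_dist e" and t0: "0 < t0" "t0 \<le> 1"
      and z: "\<forall>t\<in>{0..t0}. F (mixp q s e t) - c = 0"
    obtain \<alpha> \<beta> \<delta> where ab: "\<forall>t\<in>{0..1}. 0 < 1 + \<delta> * t \<and> F (mixp q s e t) = (\<alpha> + \<beta> * t) / (1 + \<delta> * t)"
      using F q e unfolding mob_def by blast
    have "(\<lambda>t. F (mixp q s e t) - c) 1 = 0"
    proof (rule rat2_zero[OF _ t0])
      fix t :: real assume t: "t \<in> {0..1}"
      have pos: "0 < 1 + \<delta> * t" and fe: "F (mixp q s e t) = (\<alpha> + \<beta> * t) / (1 + \<delta> * t)"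
        using ab t by auto
      have "F (mixp q s e t) * (1 + \<delta> * t) = \<alpha> + \<beta> * t" using pos fe by simp
      then show "1 + \<delta> * t \<noteq> 0 \<and> (F (mixp q s e t) - c) * (1 + \<delta> * t) = (\<alpha> - c) + (\<beta> - c * \<delta>) * t + 0 * t^2"
        using pos by (simp add: algebra_simps)
    qed (use z in auto)
    then show "F (q(s := e)) - c = 0" by simp
  next
    fix q :: "'s \<Rightarrow> 'a \<Rightarrow> real" assume "is_policy q" "near m r q"
    then show "F q - c = 0" using Z by simp
  qed
  then show ?thesis by simp
qed

lemma near_mix:
  assumes "near w \<rho> p" "near w \<rho> (p(s := e))" "0 \<le> t" "t \<le> 1"
  shows "near w \<rho> (mixp p s e t)"
  unfolding near_def
proof (intro allI)
  fix s' a
  show "\<bar>mixp p s e t s' a - w s' a\<bar> < \<rho>"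
  proof (cases "s' = s")
    case True
    have a: "\<bar>p s a - w s a\<bar> < \<rho>" "\<bar>e a - w s a\<bar> < \<rho>"
      using assms(1,2) unfolding near_def by (metis fun_upd_same)+
    have "mixp p s e t s' a - w s' a = (1 - t) * (p s a - w s a) + t * (e a - w s a)"
      using True unfolding mixp_def by (simp add: algebra_simps)
    also have "\<bar>\<dots>\<bar> \<le> (1 - t) * \<bar>p s a - w s a\<bar> + t * \<bar>e a - w s a\<bar>"
    proof -
      have "\<bar>(1 - t) * (p s a - w s a)\<bar> = (1 - t) * \<bar>p s a - w s a\<bar>" using assms(4) by (simp add: abs_mult)
      moreover have "\<bar>t * (e a - w s a)\<bar> = t * \<bar>e a - w s a\<bar>" using assms(3) by (simp add: abs_mult)
      ultimately show ?thesis by (metis abs_triangle_ineq)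
    qed
    also have "\<dots> < \<rho>"
    proof -
      have "(1 - t) * \<bar>p s a - w s a\<bar> \<le> (1 - t) * \<rho>" using a assms(4) by (intro mult_left_mono) auto
      moreover have "t * \<bar>e a - w s a\<bar> \<le> t * \<rho>" using a assms(3) by (intro mult_left_mono) auto
      moreover have "(1 - t) * \<bar>p s a - w s a\<bar> < (1 - t) * \<rho> \<or> t * \<bar>e a - w s a\<bar> < t * \<rho>"
        using a assms(3,4) by (cases "t = 1") auto
      ultimately show ?thesis by (auto simp: algebra_simps)
    qed
    finally show ?thesis .
  next
    case False
    then show ?thesis using assms(1) unfolding near_def mixp_def by auto
  qed
qed

lemma chain:
  fixes F :: "('s::finite \<Rightarrow> 'a::finite \<Rightarrow> real) \<Rightarrow> real"
  assumes H: "\<And>p s e. is_policy p \<Longrightarrow> is_dist e \<Longrightarrow> near w \<rho> p \<Longrightarrow> near w \<rho> (p(s := e)) \<Longrightarrow> F p = F (p(s := e))"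
    and w: "is_policy w" and q: "is_policy q" "near w \<rho> q"
  shows "F q = F w"
proof -
  have "\<forall>q. is_policy q \<longrightarrow> near w \<rho> q \<longrightarrow> (\<forall>s. s \<notin> X \<longrightarrow> q s = w s) \<longrightarrow> F q = F w"
    if "finite X" for X :: "'s set"
    using that
  proof (induction X rule: finite_induct)
    case empty
    then show ?case by (auto intro!: arg_cong[where f = F] ext)
  next
    case (insert s X)
    show ?case
    proof (intro allI impI)
      fix q :: "'s \<Rightarrow> 'a \<Rightarrow> real"
      assume q: "is_policy q" "near w \<rho> q" and ag: "\<forall>s'. s' \<notin> insert s X \<longrightarrow> q s' = w s'"
      define q' where "q' = q(s := w s)"
      have q'p: "is_policy q'" unfolding q'_def by (intro pol_upd q pol_row w)
      have rho: "0 < \<rho>" using q(2) unfolding near_def by (meson abs_ge_zero le_less_trans)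
      have q'n: "near w \<rho> q'" using q(2) rho unfolding q'_def near_def by auto
      have "F q' = F w" using insert.IH q'p q'n ag unfolding q'_def by auto
      moreover have "F q' = F (q'(s := q s))"
        by (rule H[OF q'p pol_row[OF q(1)] q'n]) (use q(2) in \<open>simp add: q'_def\<close>)
      moreover have "q'(s := q s) = q" unfolding q'_def by auto
      ultimately show "F q = F w" by simp
    qed
  qed
  from this[of UNIV] q show ?thesis by auto
qed

lemma lim_right:
  fixes v :: "real \<Rightarrow> real"
  assumes c: "continuous_on {0..1} v" and x: "0 \<le> x" "x < 1"
    and h: "\<And>t. x < t \<Longrightarrow> t \<le> 1 \<Longrightarrow> y \<le> v t"
  shows "y \<le> v x"
proof (rule ccontr)
  assume "\<not> y \<le> v x"
  then have e: "0 < y - v x" by simp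
  obtain d where d: "0 < d" "\<forall>x'\<in>{0..1}. dist x' x < d \<longrightarrow> dist (v x') (v x) < y - v x"
    using c x e unfolding continuous_on_iff by (meson atLeastAtMost_iff less_imp_le)
  define t where "t = min (x + d/2) 1"
  have t: "t \<in> {0..1}" "x < t" "dist t x < d" using x d unfolding t_def dist_real_def by auto
  then have "dist (v t) (v x) < y - v x" using d by auto
  then have "v t < y" unfolding dist_real_def by auto
  with h[OF t(2)] t(1) show False by auto
qed

lemma lim_left:
  fixes v :: "real \<Rightarrow> real"
  assumes c: "continuous_on {0..1} v" and x: "0 < x" "x \<le> 1"
    and h: "\<And>t. 0 \<le> t \<Longrightarrow> t < x \<Longrightarrow> y \<le> v t"
  shows "y \<le> v x"
proof (rule ccontr)
  assume "\<not> y \<le> v x"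
  then have e: "0 < y - v x" by simp
  obtain d where d: "0 < d" "\<forall>x'\<in>{0..1}. dist x' x < d \<longrightarrow> dist (v x') (v x) < y - v x"
    using c x e unfolding continuous_on_iff by (meson atLeastAtMost_iff less_imp_le)
  define t where "t = max (x - d/2) 0"
  have t: "t \<in> {0..1}" "t < x" "dist t x < d" "0 \<le> t" using x d unfolding t_def dist_real_def by auto
  then have "dist (v t) (v x) < y - v x" using d by auto
  then have "v t < y" unfolding dist_real_def by auto
  with h[OF t(4) t(2)] show False by auto
qed

lemma lim_right':
  fixes v :: "real \<Rightarrow> real"
  assumes c: "continuous_on {0..1} v" and x: "0 \<le> x" "x < 1"
    and h: "\<And>t. x < t \<Longrightarrow> t \<le> 1 \<Longrightarrow> v t \<le> y"
  shows "v x \<le> y"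
proof -
  have "- y \<le> - v x"
    by (rule lim_right[where v = "\<lambda>t. - v t", OF continuous_on_minus[OF c] x]) (use h in auto)
  then show ?thesis by simp
qed

lemma lim_left':
  fixes v :: "real \<Rightarrow> real"
  assumes c: "continuous_on {0..1} v" and x: "0 < x" "x \<le> 1"
    and h: "\<And>t. 0 \<le> t \<Longrightarrow> t < x \<Longrightarrow> v t \<le> y"
  shows "v x \<le> y"
proof -
  have "- y \<le> - v x"
    by (rule lim_left[where v = "\<lambda>t. - v t", OF continuous_on_minus[OF c] x]) (use h in auto)
  then show ?thesis by simp
qed

lemma near_open:
  fixes w m :: "'s::finite \<Rightarrow> 'a::finite \<Rightarrow> real"
  assumes "near w \<rho> m"
  shows "\<exists>r>0. \<forall>q. near m r q \<longrightarrow> near w \<rho> q"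
proof -
  define S where "S = (\<lambda>(s, a). \<bar>m s a - w s a\<bar>) ` (UNIV :: ('s \<times> 'a) set)"
  have fin: "finite S" "S \<noteq> {}" unfolding S_def by auto
  have le: "\<bar>m s a - w s a\<bar> \<le> Max S" for s a
    using fin by (intro Max_ge) (auto simp: S_def)
  obtain z where "z \<in> S" "Max S = z" using Max_in[OF fin] by auto
  then have "Max S < \<rho>" using assms unfolding S_def near_def by auto
  then show ?thesis
  proof (intro exI[of _ "\<rho> - Max S"] conjI allI impI)
    fix q assume "near m (\<rho> - Max S) q"
    then show "near w \<rho> q" unfolding near_def
    proof (intro allI)
      fix s a assume h: "\<forall>s a. \<bar>q s a - m s a\<bar> < \<rho> - Max S"
      have "\<bar>q s a - w s a\<bar> \<le> \<bar>q s a - m s a\<bar> + \<bar>m s a - w s a\<bar>"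
        using abs_triangle_ineq[of "q s a - m s a" "m s a - w s a"] by simp
      then show "\<bar>q s a - w s a\<bar> < \<rho>" using h[rule_format, of s a] le[of s a] by linarith
    qed
  qed simp
qed

lemma conv_policy:
  assumes "is_policy q" "is_policy q'" "0 \<le> t" "t \<le> 1"
  shows "is_policy (\<lambda>s a. (1 - t) * q s a + t * q' s a)"
  using assms unfolding is_policy_def is_dist_def
  by (auto simp: sum.distrib sum_distrib_left[symmetric] intro!: add_nonneg_nonneg mult_nonneg_nonneg)

lemma lip_path:
  fixes F :: "('s::finite \<Rightarrow> 'a::finite \<Rightarrow> real) \<Rightarrow> real"
  assumes F: "lip F" and q: "is_policy q" and q': "is_policy q'"
  shows "continuous_on {0..1} (\<lambda>t. F (\<lambda>s a. (1 - t) * q s a + t * q' s a))"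
proof -
  obtain K where K: "0 \<le> K" "\<And>p q h. is_policy p \<Longrightarrow> is_policy q \<Longrightarrow> (\<forall>s a. \<bar>p s a - q s a\<bar> \<le> h) \<Longrightarrow>
            \<bar>F p - F q\<bar> \<le> K * h" using F unfolding lip_def by blast
  show ?thesis unfolding continuous_on_iff
  proof (intro ballI allI impI)
    fix x e :: real assume x: "x \<in> {0..1}" and e: "0 < e"
    show "\<exists>d>0. \<forall>x'\<in>{0..1}. dist x' x < d \<longrightarrow>
        dist (F (\<lambda>s a. (1 - x') * q s a + x' * q' s a)) (F (\<lambda>s a. (1 - x) * q s a + x * q' s a)) < e"
    proof (intro exI[of _ "e / (K + 1)"] conjI ballI impI)
      show "0 < e / (K + 1)" using e K by auto
      fix x' assume x': "x' \<in> {0..1}" and dx: "dist x' x < e / (K + 1)"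
      have "\<bar>F (\<lambda>s a. (1 - x') * q s a + x' * q' s a) - F (\<lambda>s a. (1 - x) * q s a + x * q' s a)\<bar> \<le> K * \<bar>x' - x\<bar>"
      proof (rule K(2))
        show "is_policy (\<lambda>s a. (1 - x') * q s a + x' * q' s a)" using x' by (intro conv_policy q q') auto
        show "is_policy (\<lambda>s a. (1 - x) * q s a + x * q' s a)" using x by (intro conv_policy q q') auto
        show "\<forall>s a. \<bar>(1 - x') * q s a + x' * q' s a - ((1 - x) * q s a + x * q' s a)\<bar> \<le> \<bar>x' - x\<bar>"
        proof (intro allI)
          fix s a
          have "(1 - x') * q s a + x' * q' s a - ((1 - x) * q s a + x * q' s a) = (x' - x) * (q' s a - q s a)"
            by (simp add: algebra_simps)
          moreover have "\<bar>q' s a - q s a\<bar> \<le> 1"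
            using pol_le1[OF q, of s a] pol_ge0[OF q, of s a] pol_le1[OF q', of s a] pol_ge0[OF q', of s a] by auto
          ultimately show "\<bar>(1 - x') * q s a + x' * q' s a - ((1 - x) * q s a + x * q' s a)\<bar> \<le> \<bar>x' - x\<bar>"
            by (simp add: abs_mult mult_left_le)
        qed
      qed
      also have "\<dots> \<le> K * (e / (K + 1))" using dx K(1) unfolding dist_real_def by (intro mult_left_mono) auto
      also have "\<dots> < e" using K(1) e by (simp add: field_simps)
      finally show "dist (F (\<lambda>s a. (1 - x') * q s a + x' * q' s a)) (F (\<lambda>s a. (1 - x) * q s a + x * q' s a)) < e"
        unfolding dist_real_def .
    qed
  qed
qed

lemma mob_cont:
  assumes "\<forall>t\<in>{0..1}. 0 < 1 + \<delta> * t"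
  shows "continuous_on {0..1} (\<lambda>t::real. (\<alpha> + \<beta> * t) / (1 + \<delta> * t))"
  using assms by (intro continuous_intros) auto

lemma mob_diff:
  fixes \<alpha> \<beta> \<delta> t t' :: real
  assumes "0 < 1 + \<delta> * t" "0 < 1 + \<delta> * t'"
  shows "(\<alpha> + \<beta> * t) / (1 + \<delta> * t) - (\<alpha> + \<beta> * t') / (1 + \<delta> * t')
    = (\<beta> - \<alpha> * \<delta>) * (t - t') / ((1 + \<delta> * t) * (1 + \<delta> * t'))"
proof -
  have "(\<alpha> + \<beta> * t) / (1 + \<delta> * t) - (\<alpha> + \<beta> * t') / (1 + \<delta> * t')
     = ((\<alpha> + \<beta> * t) * (1 + \<delta> * t') - (\<alpha> + \<beta> * t') * (1 + \<delta> * t)) / ((1 + \<delta> * t) * (1 + \<delta> * t'))"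
    by (rule diff_frac_eq) (use assms in auto)
  also have "(\<alpha> + \<beta> * t) * (1 + \<delta> * t') - (\<alpha> + \<beta> * t') * (1 + \<delta> * t) = (\<beta> - \<alpha> * \<delta>) * (t - t')"
    by (simp add: algebra_simps)
  finally show ?thesis .
qed

lemma rat2_zero':
  fixes f :: "real \<Rightarrow> real"
  assumes "\<And>t. t \<in> {0..1} \<Longrightarrow> den t \<noteq> 0 \<and> f t * den t = cA + cB * t + cC * t^2"
    and "0 < tz" "tz \<le> 1" and "\<forall>t\<in>{0..tz}. f t = 0"
  shows "f 1 = 0"
  using rat2_zero[OF assms] .

lemma core:
  fixes F G :: "('s::finite \<Rightarrow> 'a::finite \<Rightarrow> real) \<Rightarrow> real"
    and P :: "('s \<Rightarrow> 'a \<Rightarrow> real) set"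
  assumes mF: "mob F" and mG: "mob G" and lF: "lip F" and lG: "lip G"
    and PP: "\<And>q. q \<in> P \<Longrightarrow> is_policy q"
    and w: "is_policy w" and \<rho>: "0 < \<rho>" and O: "\<And>q. is_policy q \<Longrightarrow> near w \<rho> q \<Longrightarrow> q \<in> P"
    and ntF: "\<not> trivial_on F P" and ntG: "\<not> trivial_on G P" and ne: "\<not> equivalent_on F G P"
  shows "\<exists>p\<in>P. \<exists>q\<in>P. F p > F q \<and> G q > G p"
proof (rule ccontr)
  assume "\<not> ?thesis"
  then have NE: "\<And>p q. p \<in> P \<Longrightarrow> q \<in> P \<Longrightarrow> F q < F p \<Longrightarrow> G q \<le> G p"
    by (meson not_le)
  have const_contra: False if "\<And>q. is_policy q \<Longrightarrow> F q = c" for c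
    using ntF that PP unfolding trivial_on_def by metis
  have "\<exists>q. is_policy q \<and> near w \<rho> q \<and> F q \<noteq> F w"
  proof (rule ccontr)
    assume "\<not> ?thesis"
    then have "\<And>q. is_policy q \<Longrightarrow> near w \<rho> q \<Longrightarrow> F q = F w" by blast
    then have "\<And>q. is_policy q \<Longrightarrow> F q = F w" using const_propagate[OF mF w \<rho>] by blast
    then show False using const_contra by blast
  qed
  then obtain q0 where q0: "is_policy q0" "near w \<rho> q0" "F q0 \<noteq> F w" by blast
  obtain p0 s0 e where p0: "is_policy p0" and e: "is_dist e" and np0: "near w \<rho> p0"
    and np1: "near w \<rho> (p0(s0 := e))" and Fne: "F p0 \<noteq> F (p0(s0 := e))"
  proof -
    have "\<exists>p s e. is_policy p \<and> is_dist e \<and> near w \<rho> p \<and> near w \<rho> (p(s := e)) \<and> F p \<noteq> F (p(s := e))"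
    proof (rule ccontr)
      assume "\<not> ?thesis"
      then have "F q0 = F w" using chain[OF _ w q0(1,2), of F] by blast
      then show False using q0 by simp
    qed
    then show ?thesis using that by blast
  qed
  define L where "L = mixp p0 s0 e"
  have Lpol: "is_policy (L t)" if "t \<in> {0..1}" for t
    unfolding L_def using that by (intro mixp_policy p0 e) auto
  have LP: "L t \<in> P" if "t \<in> {0..1}" for t
    using that Lpol[OF that] near_mix[OF np0 np1] O unfolding L_def by auto
  have L0: "L 0 = p0" and L1: "L 1 = p0(s0 := e)" unfolding L_def by auto
  obtain \<alpha>1 \<beta>1 \<delta>1 where m1: "\<forall>t\<in>{0..1}. 0 < 1 + \<delta>1 * t \<and> F (L t) = (\<alpha>1 + \<beta>1 * t) / (1 + \<delta>1 * t)"
    using mF p0 e unfolding mob_def L_def by blast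
  obtain \<alpha>2 \<beta>2 \<delta>2 where m2: "\<forall>t\<in>{0..1}. 0 < 1 + \<delta>2 * t \<and> G (L t) = (\<alpha>2 + \<beta>2 * t) / (1 + \<delta>2 * t)"
    using mG p0 e unfolding mob_def L_def by blast
  define u where "u = (\<lambda>t. (\<alpha>1 + \<beta>1 * t) / (1 + \<delta>1 * t))"
  define v where "v = (\<lambda>t. (\<alpha>2 + \<beta>2 * t) / (1 + \<delta>2 * t))"
  define k1 where "k1 = \<beta>1 - \<alpha>1 * \<delta>1"
  define k2 where "k2 = \<beta>2 - \<alpha>2 * \<delta>2"
  have D1: "0 < 1 + \<delta>1 * t" if "t \<in> {0..1}" for t using m1 that by auto
  have D2: "0 < 1 + \<delta>2 * t" if "t \<in> {0..1}" for t using m2 that by auto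
  have Fu: "F (L t) = u t" if "t \<in> {0..1}" for t using m1 that unfolding u_def by auto
  have Gv: "G (L t) = v t" if "t \<in> {0..1}" for t using m2 that unfolding v_def by auto
  have udiff: "u t - u t' = k1 * (t - t') / ((1 + \<delta>1 * t) * (1 + \<delta>1 * t'))"
    if "t \<in> {0..1}" "t' \<in> {0..1}" for t t'
    unfolding u_def k1_def by (rule mob_diff[OF D1[OF that(1)] D1[OF that(2)]])
  have vdiff: "v t - v t' = k2 * (t - t') / ((1 + \<delta>2 * t) * (1 + \<delta>2 * t'))"
    if "t \<in> {0..1}" "t' \<in> {0..1}" for t t'
    unfolding v_def k2_def by (rule mob_diff[OF D2[OF that(1)] D2[OF that(2)]])
  have usgn: "(0 < u t - u t' \<longleftrightarrow> 0 < k1 * (t - t')) \<and> (u t - u t' < 0 \<longleftrightarrow> k1 * (t - t') < 0)"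
    if "t \<in> {0..1}" "t' \<in> {0..1}" for t t'
  proof -
    have "0 < (1 + \<delta>1 * t) * (1 + \<delta>1 * t')" using D1 that by auto
    then show ?thesis unfolding udiff[OF that] by (simp add: zero_less_divide_iff divide_less_0_iff)
  qed
  have vsgn: "(0 < v t - v t' \<longleftrightarrow> 0 < k2 * (t - t')) \<and> (v t - v t' < 0 \<longleftrightarrow> k2 * (t - t') < 0)"
    if "t \<in> {0..1}" "t' \<in> {0..1}" for t t'
  proof -
    have "0 < (1 + \<delta>2 * t) * (1 + \<delta>2 * t')" using D2 that by auto
    then show ?thesis unfolding vdiff[OF that] by (simp add: zero_less_divide_iff divide_less_0_iff)
  qed
  have k1nz: "k1 \<noteq> 0"
  proof
    assume "k1 = 0"
    then have "u 1 = u 0" using udiff[of 1 0] by simp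
    then show False using Fne Fu[of 0] Fu[of 1] L0 L1 by simp
  qed
  have k12: "0 \<le> k1 * k2"
  proof (rule ccontr)
    assume neg: "\<not> 0 \<le> k1 * k2"
    have s1: "(0 < u 1 - u 0 \<longleftrightarrow> 0 < k1) \<and> (u 1 - u 0 < 0 \<longleftrightarrow> k1 < 0)" using usgn[of 1 0] by simp
    have s2: "(0 < v 1 - v 0 \<longleftrightarrow> 0 < k2) \<and> (v 1 - v 0 < 0 \<longleftrightarrow> k2 < 0)" using vsgn[of 1 0] by simp
    show False
    proof (cases "0 < k1")
      case True
      then have "k2 < 0" using neg by (metis linorder_not_less mult_nonneg_nonneg less_imp_le)
      then have "u 0 < u 1" "v 1 < v 0" using s1 s2 True by auto
      then have "G (L 0) \<le> G (L 1)" using NE[OF LP[of 1] LP[of 0]] Fu Gv by auto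
      then show False using \<open>v 1 < v 0\<close> Gv by auto
    next
      case False
      then have k1n: "k1 < 0" using k1nz by simp
      then have "0 < k2" using neg by (metis linorder_not_less mult_nonpos_nonpos less_imp_le)
      then have "u 1 < u 0" "v 0 < v 1" using s1 s2 k1n by auto
      then have "G (L 1) \<le> G (L 0)" using NE[OF LP[of 0] LP[of 1]] Fu Gv by auto
      then show False using \<open>v 0 < v 1\<close> Gv by auto
    qed
  qed
  define a where "a = \<beta>2 - \<alpha>2 * \<delta>1"
  define b where "b = \<alpha>2 * \<beta>1 - \<beta>2 * \<alpha>1"
  define c where "c = \<delta>2 - \<delta>1"
  define d where "d = \<beta>1 - \<delta>2 * \<alpha>1"
  have rel: "(c * u t + d) * v t = a * u t + b" if t: "t \<in> {0..1}" for t
  proof -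
    have p1: "0 < 1 + \<delta>1 * t" and p2: "0 < 1 + \<delta>2 * t" using D1[OF t] D2[OF t] by auto
    have uu: "u t * (1 + \<delta>1 * t) = \<alpha>1 + \<beta>1 * t" using p1 unfolding u_def by simp
    have vv: "v t * (1 + \<delta>2 * t) = \<alpha>2 + \<beta>2 * t" using p2 unfolding v_def by simp
    have "(c * u t + d) * v t * ((1 + \<delta>1 * t) * (1 + \<delta>2 * t))
        = (c * (u t * (1 + \<delta>1 * t)) + d * (1 + \<delta>1 * t)) * (v t * (1 + \<delta>2 * t))"
      by (simp add: algebra_simps)
    also have "\<dots> = (c * (\<alpha>1 + \<beta>1 * t) + d * (1 + \<delta>1 * t)) * (\<alpha>2 + \<beta>2 * t)" unfolding uu vv ..
    also have "\<dots> = (a * (\<alpha>1 + \<beta>1 * t) + b * (1 + \<delta>1 * t)) * (1 + \<delta>2 * t)"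
      unfolding a_def b_def c_def d_def by (simp add: algebra_simps)
    also have "\<dots> = (a * (u t * (1 + \<delta>1 * t)) + b * (1 + \<delta>1 * t)) * (1 + \<delta>2 * t)" unfolding uu ..
    also have "\<dots> = (a * u t + b) * ((1 + \<delta>1 * t) * (1 + \<delta>2 * t))" by (simp add: algebra_simps)
    finally show ?thesis using p1 p2 by simp
  qed
  define m where "m = L (1/2)"
  have mpol: "is_policy m" unfolding m_def by (rule Lpol) auto
  have mn: "near w \<rho> m" unfolding m_def L_def by (rule near_mix[OF np0 np1]) auto
  obtain r1 where r1: "0 < r1" "\<And>q. near m r1 q \<Longrightarrow> near w \<rho> q" using near_open[OF mn] by blast
  have Fm: "F m = u (1/2)" unfolding m_def by (rule Fu) auto
  have uh0: "(0 < u (1/2) - u 0 \<longleftrightarrow> 0 < k1) \<and> (u (1/2) - u 0 < 0 \<longleftrightarrow> k1 < 0)"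
    using usgn[of "1/2" 0] by (simp add: zero_less_mult_iff mult_less_0_iff)
  have uh1: "(0 < u 1 - u (1/2) \<longleftrightarrow> 0 < k1) \<and> (u 1 - u (1/2) < 0 \<longleftrightarrow> k1 < 0)"
    using usgn[of 1 "1/2"] by (simp add: zero_less_mult_iff mult_less_0_iff)
  define \<eta> where "\<eta> = min \<bar>u 0 - u (1/2)\<bar> \<bar>u 1 - u (1/2)\<bar>"
  have \<eta>0: "0 < \<eta>" unfolding \<eta>_def using uh0 uh1 k1nz by (cases "0 < k1") auto
  obtain K1 where K1: "0 \<le> K1" "\<And>p q h. is_policy p \<Longrightarrow> is_policy q \<Longrightarrow> (\<forall>s a. \<bar>p s a - q s a\<bar> \<le> h) \<Longrightarrow>
            \<bar>F p - F q\<bar> \<le> K1 * h" using lF unfolding lip_def by blast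
  define r where "r = min r1 (\<eta> / (K1 + 1))"
  have r0: "0 < r" unfolding r_def using r1 \<eta>0 K1 by auto
  have uc: "continuous_on {0..1} u" unfolding u_def by (rule mob_cont) (use D1 in auto)
  have vc: "continuous_on {0..1} v" unfolding v_def by (rule mob_cont) (use D2 in auto)
  have Vprop: "(c * F q + d) * G q - (a * F q + b) = 0" if q: "is_policy q" and nq: "near m r q" for q
  proof -
    have "near m r1 q" using nq unfolding near_def r_def by (meson min.strict_boundedE)
    then have qP: "q \<in> P" using r1 O q by blast
    have "\<bar>F q - F m\<bar> \<le> K1 * r" using nq unfolding near_def by (intro K1(2) q mpol) (auto intro: less_imp_le)
    also have "\<dots> \<le> K1 * (\<eta> / (K1 + 1))" unfolding r_def using K1(1) by (intro mult_left_mono) auto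
    also have "\<dots> < \<eta>" using K1(1) \<eta>0 by (simp add: field_simps)
    finally have Fq: "\<bar>F q - u (1/2)\<bar> < \<eta>" using Fm by simp
    have btw: "(u 0 < F q \<and> F q < u 1) \<or> (u 1 < F q \<and> F q < u 0)"
    proof (cases "0 < k1")
      case True
      then show ?thesis using uh0 uh1 Fq unfolding \<eta>_def by auto
    next
      case False
      then have "k1 < 0" using k1nz by simp
      then show ?thesis using uh0 uh1 Fq unfolding \<eta>_def by auto
    qed
    obtain ts where ts: "0 \<le> ts" "ts \<le> 1" "u ts = F q"
      using btw
    proof
      assume "u 0 < F q \<and> F q < u 1"
      then show ?thesis using IVT'[of u 0 "F q" 1, OF _ _ _ uc] that by auto
    next
      assume "u 1 < F q \<and> F q < u 0"
      then show ?thesis using IVT2'[of u 1 "F q" 0, OF _ _ _ uc] that by auto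
    qed
    have ts0: "0 < ts" using ts btw by (cases "ts = 0") auto
    have ts1: "ts < 1" using ts btw by (cases "ts = 1") auto
    have tsI: "ts \<in> {0..1}" using ts by auto
    have up: "G q \<le> v t" if "t \<in> {0..1}" "0 < k1 * (t - ts)" for t
    proof -
      have "F q < F (L t)" using usgn[OF that(1) tsI] that ts(3) Fu[OF that(1)] by auto
      then show ?thesis using NE[OF LP[OF that(1)] qP] Gv[OF that(1)] by simp
    qed
    have dn: "v t \<le> G q" if "t \<in> {0..1}" "k1 * (t - ts) < 0" for t
    proof -
      have "F (L t) < F q" using usgn[OF that(1) tsI] that ts(3) Fu[OF that(1)] by auto
      then show ?thesis using NE[OF qP LP[OF that(1)]] Gv[OF that(1)] by simp
    qed
    have "G q = v ts"
    proof (cases "0 < k1")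
      case True
      have "G q \<le> v ts"
        by (rule lim_right[OF vc ts(1) ts1]) (rule up, use True ts in auto)
      moreover have "v ts \<le> G q"
        by (rule lim_left'[OF vc ts0 ts(2)]) (rule dn, use True ts in \<open>auto simp: mult_pos_neg\<close>)
      ultimately show ?thesis by simp
    next
      case False
      then have kn: "k1 < 0" using k1nz by simp
      have "v ts \<le> G q"
        by (rule lim_right'[OF vc ts(1) ts1]) (rule dn, use kn ts in \<open>auto simp: mult_neg_pos\<close>)
      moreover have "G q \<le> v ts"
        by (rule lim_left[OF vc ts0 ts(2)]) (rule up, use kn ts in \<open>auto simp: mult_neg_neg\<close>)
      ultimately show ?thesis by simp
    qed
    then show ?thesis using rel[OF tsI] ts(3) by simp
  qed
  have PhiAll: "(c * F q + d) * G q - (a * F q + b) = 0" if q: "is_policy q" for q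
  proof (rule propagate[where \<Phi> = "\<lambda>q. (c * F q + d) * G q - (a * F q + b)", OF _ mpol r0 Vprop q])
    fix q :: "'s \<Rightarrow> 'a \<Rightarrow> real" and s e t0
    assume q: "is_policy q" and e: "is_dist e" and t0: "0 < t0" "t0 \<le> 1"
      and z: "\<forall>t\<in>{0..t0}. (c * F (mixp q s e t) + d) * G (mixp q s e t) - (a * F (mixp q s e t) + b) = 0"
    obtain A1 B1 E1 where n1: "\<forall>t\<in>{0..1}. 0 < 1 + E1 * t \<and> F (mixp q s e t) = (A1 + B1 * t) / (1 + E1 * t)"
      using mF q e unfolding mob_def by blast
    obtain A2 B2 E2 where n2: "\<forall>t\<in>{0..1}. 0 < 1 + E2 * t \<and> G (mixp q s e t) = (A2 + B2 * t) / (1 + E2 * t)"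
      using mG q e unfolding mob_def by blast
    define X0 where "X0 = c * A1 + d"
    define X1 where "X1 = c * B1 + d * E1"
    define Z0 where "Z0 = a * A1 + b"
    define Z1 where "Z1 = a * B1 + b * E1"
    have "(\<lambda>t. (c * F (mixp q s e t) + d) * G (mixp q s e t) - (a * F (mixp q s e t) + b)) 1 = 0"
    proof (rule rat2_zero'[where den = "\<lambda>t. (1 + E1 * t) * (1 + E2 * t)"
          and cA = "X0 * A2 - Z0" and cB = "X0 * B2 + X1 * A2 - Z0 * E2 - Z1" and cC = "X1 * B2 - Z1 * E2", OF _ t0])
      fix t :: real assume t: "t \<in> {0..1}"
      have p1: "0 < 1 + E1 * t" and f1: "F (mixp q s e t) = (A1 + B1 * t) / (1 + E1 * t)" using n1 t by auto
      have p2: "0 < 1 + E2 * t" and f2: "G (mixp q s e t) = (A2 + B2 * t) / (1 + E2 * t)" using n2 t by auto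
      have uu: "F (mixp q s e t) * (1 + E1 * t) = A1 + B1 * t" using p1 f1 by simp
      have vv: "G (mixp q s e t) * (1 + E2 * t) = A2 + B2 * t" using p2 f2 by simp
      have "((c * F (mixp q s e t) + d) * G (mixp q s e t) - (a * F (mixp q s e t) + b)) * ((1 + E1 * t) * (1 + E2 * t))
        = (c * (F (mixp q s e t) * (1 + E1 * t)) + d * (1 + E1 * t)) * (G (mixp q s e t) * (1 + E2 * t))
          - (a * (F (mixp q s e t) * (1 + E1 * t)) + b * (1 + E1 * t)) * (1 + E2 * t)"
        by (simp add: algebra_simps)
      also have "\<dots> = (c * (A1 + B1 * t) + d * (1 + E1 * t)) * (A2 + B2 * t) - (a * (A1 + B1 * t) + b * (1 + E1 * t)) * (1 + E2 * t)"
        unfolding uu vv ..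
      also have "\<dots> = X0 * A2 - Z0 + (X0 * B2 + X1 * A2 - Z0 * E2 - Z1) * t + (X1 * B2 - Z1 * E2) * t\<^sup>2"
        unfolding X0_def X1_def Z0_def Z1_def by (simp add: algebra_simps power2_eq_square)
      finally show "(1 + E1 * t) * (1 + E2 * t) \<noteq> 0 \<and>
          ((c * F (mixp q s e t) + d) * G (mixp q s e t) - (a * F (mixp q s e t) + b)) * ((1 + E1 * t) * (1 + E2 * t))
          = X0 * A2 - Z0 + (X0 * B2 + X1 * A2 - Z0 * E2 - Z1) * t + (X1 * B2 - Z1 * E2) * t\<^sup>2"
        using p1 p2 by simp
    qed (use z in auto)
    then show "(c * F (q(s := e)) + d) * G (q(s := e)) - (a * F (q(s := e)) + b) = 0" by simp
  qed
  show False
  proof (cases "0 < k1 * k2")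
    case True
    have Dl: "a * d - b * c = k1 * k2" unfolding a_def b_def c_def d_def k1_def k2_def by (simp add: algebra_simps)
    have nz: "c * F q + d \<noteq> 0" if q: "is_policy q" for q
    proof
      assume h: "c * F q + d = 0"
      then have h2: "a * F q + b = 0" using PhiAll[OF q] by simp
      have "a * d - b * c = a * (c * F q + d) - c * (a * F q + b)" by (simp add: algebra_simps)
      also have "\<dots> = 0" using h h2 by simp
      finally show False using True Dl by auto
    qed
    have sg: "0 < (c * F q + d) * (c * F q' + d)" if q: "is_policy q" and q': "is_policy q'" for q q'
    proof (rule ccontr)
      assume "\<not> ?thesis"
      then have neg: "(c * F q + d) * (c * F q' + d) < 0" using nz[OF q] nz[OF q'] by (simp add: linorder_not_less le_less)
      define h where "h = (\<lambda>t. c * F (\<lambda>s a. (1 - t) * q s a + t * q' s a) + d)"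
      have hc: "continuous_on {0..1} h" unfolding h_def
        by (intro continuous_intros lip_path[OF lF q q'])
      have h0: "h 0 = c * F q + d" and h1: "h 1 = c * F q' + d" unfolding h_def by simp_all
      obtain t where t: "0 \<le> t" "t \<le> 1" "h t = 0"
      proof (cases "h 0 < 0")
        case True
        then have "0 \<le> h 1" using neg h0 h1 by (smt (verit) mult_neg_neg)
        then show ?thesis using IVT'[of h 0 0 1, OF _ _ _ hc] True that by auto
      next
        case False
        then have "h 1 \<le> 0" using neg h0 h1 by (smt (verit) mult_nonneg_nonneg)
        then show ?thesis using IVT2'[of h 1 0 0, OF _ _ _ hc] False that by auto
      qed
      have "is_policy (\<lambda>s a. (1 - t) * q s a + t * q' s a)" by (rule conv_policy[OF q q' t(1,2)])
      from nz[OF this] t(3) show False unfolding h_def by simp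
    qed
    have Geq: "G q = (a * F q + b) / (c * F q + d)" if q: "is_policy q" for q
      using PhiAll[OF q] nz[OF q] by (simp add: field_simps)
    have "equivalent_on F G P"
      unfolding equivalent_on_def
    proof (intro ballI)
      fix x y assume x: "x \<in> P" and y: "y \<in> P"
      have px: "is_policy x" and py: "is_policy y" using PP x y by auto
      have "G x - G y = ((a * F x + b) * (c * F y + d) - (a * F y + b) * (c * F x + d)) / ((c * F x + d) * (c * F y + d))"
        unfolding Geq[OF px] Geq[OF py] by (rule diff_frac_eq) (use nz px py in auto)
      also have "(a * F x + b) * (c * F y + d) - (a * F y + b) * (c * F x + d) = (a * d - b * c) * (F x - F y)"
        by (simp add: algebra_simps)
      finally have "G x - G y = (k1 * k2) * (F x - F y) / ((c * F x + d) * (c * F y + d))" using Dl by simp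
      moreover have "0 < (c * F x + d) * (c * F y + d)" by (rule sg[OF px py])
      ultimately have ge: "G x - G y = (F x - F y) * (k1 * k2 / ((c * F x + d) * (c * F y + d)))"
        and pq: "0 < k1 * k2 / ((c * F x + d) * (c * F y + d))"
        using True by (auto intro: divide_pos_pos)
      have "0 \<le> G x - G y \<longleftrightarrow> 0 * (k1 * k2 / ((c * F x + d) * (c * F y + d))) \<le> (F x - F y) * (k1 * k2 / ((c * F x + d) * (c * F y + d)))"
        unfolding ge by simp
      also have "\<dots> \<longleftrightarrow> 0 \<le> F x - F y" by (rule mult_le_cancel_right_pos[OF pq])
      finally have "0 \<le> G x - G y \<longleftrightarrow> 0 \<le> F x - F y" .
      then show "(F y \<le> F x) = (G y \<le> G x)" by simp
    qed
    then show False using ne by simp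
  next
    case False
    then have k2z: "k2 = 0" using k12 k1nz by simp
    then have b2: "\<beta>2 = \<alpha>2 * \<delta>2" unfolding k2_def by simp
    have ab: "a = \<alpha>2 * c" "b = \<alpha>2 * d" unfolding a_def b_def c_def d_def using b2 by (simp_all add: algebra_simps)
    have kc: "c * \<alpha>1 + d = k1" unfolding c_def d_def k1_def by (simp add: algebra_simps)
    have Z: "(c * F q + d) * (G q - \<alpha>2) = 0" if q: "is_policy q" for q
      using PhiAll[OF q] unfolding ab by (simp add: algebra_simps)
    obtain q1 where q1: "q1 \<in> P" "G q1 \<noteq> \<alpha>2"
      using ntG unfolding trivial_on_def by metis
    have q1p: "is_policy q1" using PP q1 by auto
    obtain K2 where K2: "0 \<le> K2" "\<And>p q h. is_policy p \<Longrightarrow> is_policy q \<Longrightarrow> (\<forall>s a. \<bar>p s a - q s a\<bar> \<le> h) \<Longrightarrow>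
            \<bar>G p - G q\<bar> \<le> K2 * h" using lG unfolding lip_def by blast
    define r3 where "r3 = \<bar>G q1 - \<alpha>2\<bar> / (K2 + 1)"
    have r3: "0 < r3" unfolding r3_def using q1 K2 by auto
    have cz: "c * F q + d = 0" if q: "is_policy q" and nq: "near q1 r3 q" for q
    proof -
      have "\<bar>G q - G q1\<bar> \<le> K2 * r3" using nq unfolding near_def by (intro K2(2) q q1p) (auto intro: less_imp_le)
      also have "\<dots> < \<bar>G q1 - \<alpha>2\<bar>" unfolding r3_def using K2(1) q1 by (simp add: field_simps)
      finally have "G q \<noteq> \<alpha>2" by auto
      then show ?thesis using Z[OF q] by simp
    qed
    have nq1: "near q1 r3 q1" unfolding near_def using r3 by simp
    have cnz: "c \<noteq> 0"
    proof
      assume "c = 0"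
      then have "d = 0" using cz[OF q1p nq1] by simp
      then show False using kc k1nz \<open>c = 0\<close> by simp
    qed
    have "F q = - d / c" if "is_policy q" "near q1 r3 q" for q
      using cz[OF that] cnz by (simp add: field_simps)
    then have "\<And>q. is_policy q \<Longrightarrow> F q = - d / c" using const_propagate[OF mF q1p r3] by blast
    then show False using const_contra by blast
  qed
qed

lemma unif_policy: "is_policy (\<lambda>(s::'s::finite) (a::'a::finite). 1 / real CARD('a))"
  unfolding is_policy_def is_dist_def by simp

lemma det_policy: "is_policy (\<lambda>(s::'s::finite) (a::'a::finite). if a = a0 then 1 else 0)"
  unfolding is_policy_def is_dist_def by simp

theorem mainTheorem12:
  fixes d0 :: "'s::finite \<Rightarrow> real"
    and R :: "'s \<Rightarrow> 'a::finite \<Rightarrow> real"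
    and \<gamma> :: real
    and P :: "('s \<Rightarrow> 'a \<Rightarrow> real) set"
    and T T' :: "'s \<Rightarrow> 'a \<Rightarrow> 's \<Rightarrow> real"
  assumes "CARD('a) > 1"
    and "is_dist d0"
    and "0 \<le> \<gamma>" and "\<gamma> < 1"
    and "P = policies
         \<or> (\<exists>\<epsilon> T0. \<epsilon> > 0 \<and> is_transition T0 \<and> all_reachable d0 T0
                  \<and> P = eps_suboptimal d0 R \<gamma> T0 \<epsilon>)
         \<or> (\<exists>\<delta>. \<delta> < 1 \<and> P = delta_deterministic \<delta>)"
    and "is_transition T" and "all_reachable d0 T"
    and "is_transition T'" and "all_reachable d0 T'"
    and "\<not> trivial_on (J d0 R \<gamma> T) P"
    and "\<not> trivial_on (J d0 R \<gamma> T') P"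
    and "\<not> equivalent_on (J d0 R \<gamma> T) (J d0 R \<gamma> T') P"
  shows "exploitable d0 R \<gamma> T T' P"
proof -
  note g0 = assms(3) and g1 = assms(4) and T = assms(6) and T' = assms(8)
  have O: "\<exists>w \<rho>. is_policy w \<and> 0 < \<rho> \<and> (\<forall>q. is_policy q \<longrightarrow> near w \<rho> q \<longrightarrow> q \<in> P) \<and> (\<forall>q\<in>P. is_policy q)"
    using assms(5)
  proof (elim disjE exE conjE)
    assume P: "P = policies"
    show ?thesis
      by (rule exI[of _ "\<lambda>s a. 1 / real CARD('a)"], rule exI[of _ 1]) (auto simp: P policies_def unif_policy)
  next
    fix \<epsilon> T0
    assume \<epsilon>: "0 < \<epsilon>" and T0: "is_transition T0" and P: "P = eps_suboptimal d0 R \<gamma> T0 \<epsilon>"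
    define J0 where "J0 = J d0 R \<gamma> T0"
    obtain K where K: "0 \<le> K" "\<And>p q h. is_policy p \<Longrightarrow> is_policy q \<Longrightarrow> (\<forall>s a. \<bar>p s a - q s a\<bar> \<le> h) \<Longrightarrow>
            \<bar>J0 p - J0 q\<bar> \<le> K * h" using J_lip'[OF T0 g0 g1] unfolding lip_def J0_def by blast
    define u where "u = (\<lambda>(s::'s) (a::'a). 1 / real CARD('a))"
    have up: "is_policy u" unfolding u_def by (rule unif_policy)
    have ne: "(policies :: ('s \<Rightarrow> 'a \<Rightarrow> real) set) \<noteq> {}" using up unfolding policies_def by auto
    have bdd: "bdd_above (J0 ` policies)"
    proof (rule bdd_aboveI2)
      fix q :: "'s \<Rightarrow> 'a \<Rightarrow> real" assume "q \<in> policies"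
      then have q: "is_policy q" unfolding policies_def by auto
      have "\<bar>J0 q - J0 u\<bar> \<le> K * 1"
        using pol_le1[OF q] pol_ge0[OF q] pol_le1[OF up] pol_ge0[OF up]
        by (intro K(2) q up) (smt (verit))
      then show "J0 q \<le> J0 u + K" by simp
    qed
    define S where "S = (SUP q\<in>policies. J0 q)"
    have "S - \<epsilon>/2 < S" using \<epsilon> by simp
    then obtain w where w: "w \<in> policies" "S - \<epsilon>/2 < J0 w"
      unfolding S_def using less_cSUP_iff[OF ne bdd] by blast
    have wp: "is_policy w" using w unfolding policies_def by auto
    define \<rho> where "\<rho> = \<epsilon> / (2 * (K + 1))"
    have \<rho>: "0 < \<rho>" unfolding \<rho>_def using \<epsilon> K by auto
    show ?thesis
    proof (intro exI[of _ w] exI[of _ \<rho>] conjI allI impI ballI wp \<rho>)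
      fix q assume q: "is_policy q" and nq: "near w \<rho> q"
      have "\<bar>J0 q - J0 w\<bar> \<le> K * \<rho>" using nq unfolding near_def by (intro K(2) q wp) (auto intro: less_imp_le)
      also have "\<dots> < \<epsilon> / 2" unfolding \<rho>_def using K(1) \<epsilon> by (simp add: field_simps)
      finally have "\<bar>J0 q - J0 w\<bar> < \<epsilon> / 2" .
      then have "S - \<epsilon> \<le> J0 q" using w(2) by linarith
      then show "q \<in> P" unfolding P eps_suboptimal_def S_def J0_def policies_def using q by simp
    next
      fix q assume "q \<in> P" then show "is_policy q" unfolding P eps_suboptimal_def policies_def by simp
    qed
  next
    fix \<delta> assume \<delta>: "\<delta> < 1" and P: "P = delta_deterministic \<delta>"
    define a0 where "a0 = (undefined :: 'a)"
    define w where "w = (\<lambda>(s::'s) (a::'a). if a = a0 then 1 else 0 :: real)"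
    have wp: "is_policy w" unfolding w_def by (rule det_policy)
    show ?thesis
    proof (intro exI[of _ w] exI[of _ "1 - \<delta>"] conjI allI impI ballI wp)
      show "0 < 1 - \<delta>" using \<delta> by simp
      fix q assume q: "is_policy q" and nq: "near w (1 - \<delta>) q"
      have "\<delta> \<le> (MAX a. q s a)" for s
      proof -
        have "\<bar>q s a0 - w s a0\<bar> < 1 - \<delta>" using nq unfolding near_def by auto
        then have "\<delta> < q s a0" unfolding w_def by auto
        also have "q s a0 \<le> (MAX a. q s a)" by (rule Max_ge) auto
        finally show ?thesis by simp
      qed
      then show "q \<in> P" unfolding P delta_deterministic_def policies_def using q by simp
    next
      fix q assume "q \<in> P" then show "is_policy q" unfolding P delta_deterministic_def policies_def by simp
    qed
  qed
  then obtain w \<rho> where w: "is_policy w" and \<rho>: "0 < \<rho>" and Ow: "\<And>q. is_policy q \<Longrightarrow> near w \<rho> q \<Longrightarrow> q \<in> P"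
    and PP: "\<And>q. q \<in> P \<Longrightarrow> is_policy q" by blast
  have "\<exists>p\<in>P. \<exists>q\<in>P. J d0 R \<gamma> T p > J d0 R \<gamma> T q \<and> J d0 R \<gamma> T' q > J d0 R \<gamma> T' p"
    by (rule core[OF J_mob[OF T g0 g1] J_mob[OF T' g0 g1] J_lip'[OF T g0 g1] J_lip'[OF T' g0 g1] PP w \<rho> Ow
          assms(10) assms(11) assms(12)])
  then show ?thesis unfolding exploitable_def by blast
qed


end
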